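(* Let $P,Q$ be lattice paths from $(0,0)$ to $(m,r)$ with $P$ never going above $Q$ and $[P,Q]$ a connected skew shape. Then the edges of the lattice path matroid polytope $\mathcal{P}(M[P,Q])$ correspond to the block-tiled bottoms with exactly $1$ block inside the region $[P,Q]$.
   Context: Lattice paths use steps $E=(1,0)$, $N=(0,1)$. $M[P,Q]$ is the matroid on $[m+r]$ whose bases are the $r$-subsets $B$ such that the lattice path with North steps exactly at positions in $B$ stays between $P$ and $Q$; $\mathcal{P}(M[P,Q])=\mathrm{conv}\{\sum_{b\in B}e_b\}\subseteq\mathbb{R}^{m+r}$. $[P,Q]$ connected means $P,Q$ meet only at $(0,0)$ and $(m,r)$. Each unit box in $[P,Q]$ with lower-left corner $(i,j)$ is labeled $i+j+1$. A block is a border strip (connected nonempty skew shape with no $2\times2$ square) of unit boxes inside $[P,Q]$, regarded as a labeled tableau; clones are blocks equal as labeled tableaux, differing only in position. An outside corner of $[P,Q]$ is a corner $NE$ on $P$ or a corner $EN$ on $Q$. For lattice paths $\lambda,\mu$ from $(0,0)$ to $(m,r)$ in $[P,Q]$ with $\lambda$ never above $\mu$ and a tiling $\tau$ of the boxes of $[\lambda,\mu]$, $[\lambda,\mu]_\tau$ is a block-tiled region if: (1) each maximal continuous intersection of $\lambda$ and $\mu$ passes through an outside corner or an end point of $[P,Q]$; (2) $\tau$ tiles all boxes of $[\lambda,\mu]$ by blocks without gaps or overlaps; (3) any two blocks of $\tau$ containing boxes with the same label are clones. A block-tiled band is a block-tiled region containing no $2\times2$ square. Block-tiled bands are in the same family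 if their sets of maximal continuous intersections and of clones constituting them are the same. A block-tiled bottom is a block-tiled band that is the lowest among the block-tiled bands in its family. *)

theory Defs
  imports "HOL-Analysis.Analysis" "HOL-Library.Function_Algebras"
begin

section \<open>Real vector structure on functions (used to model R^(m+r) as nat => real)\<close>

instantiation "fun" :: (type, real_vector) real_vector
begin
definition scaleR_fun :: "real \<Rightarrow> ('a \<Rightarrow> 'b) \<Rightarrow> 'a \<Rightarrow> 'b"
  where "scaleR_fun c f = (\<lambda>x. c *\<^sub>R f x)"
instance
  by standard (auto simp: scaleR_fun_def fun_eq_iff scaleR_add_right scaleR_add_left)
end

text \<open>A lattice path is a list of steps: True = N = (0,1), False = E = (1,0).
  Step number k (1-indexed) is the list entry at index k-1.\<close>

definition lattice_path :: "nat \<Rightarrow> nat \<Rightarrow> bool list \<Rightarrow> bool" where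
  "lattice_path m r p \<longleftrightarrow> length p = m + r \<and> length (filter id p) = r"

definition pt :: "bool list \<Rightarrow> nat \<Rightarrow> nat \<times> nat" where
  "pt p k = (length (filter Not (take k p)), length (filter id (take k p)))"

definition ht :: "bool list \<Rightarrow> nat \<Rightarrow> nat" where
  "ht p k = snd (pt p k)"

definition never_above :: "bool list \<Rightarrow> bool list \<Rightarrow> bool" where
  "never_above p q \<longleftrightarrow> (\<forall>k \<le> length p. ht p k \<le> ht q k)"

definition path_points :: "bool list \<Rightarrow> (nat \<times> nat) set" where
  "path_points p = {pt p k | k. k \<le> length p}"

definition connected_region :: "nat \<Rightarrow> nat \<Rightarrow> bool list \<Rightarrow> bool list \<Rightarrow> bool" where
  "connected_region m r P Q \<longleftrightarrow> path_points P \<inter> path_points Q = {(0,0), (m,r)}"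

definition Npos :: "bool list \<Rightarrow> nat set" where
  "Npos p = {Suc k | k. k < length p \<and> p ! k}"

definition path_of :: "nat \<Rightarrow> nat \<Rightarrow> nat set \<Rightarrow> bool list" where
  "path_of m r B = map (\<lambda>k. Suc k \<in> B) [0..<m + r]"

definition in_region :: "bool list \<Rightarrow> bool list \<Rightarrow> bool list \<Rightarrow> bool" where
  "in_region P Q l \<longleftrightarrow> length l = length P \<and> never_above P l \<and> never_above l Q"

definition lpm_bases :: "nat \<Rightarrow> nat \<Rightarrow> bool list \<Rightarrow> bool list \<Rightarrow> nat set set" where
  "lpm_bases m r P Q =
     {B. B \<subseteq> {1..m + r} \<and> card B = r \<and> in_region P Q (path_of m r B)}"

text \<open>Indicator vector e_B = sum of e_b (b in B), as an element of nat => real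
  supported on [m+r].\<close>
definition ind_vec :: "nat set \<Rightarrow> (nat \<Rightarrow> real)" where
  "ind_vec B = (\<lambda>i. if i \<in> B then 1 else 0)"

definition lpm_polytope :: "nat \<Rightarrow> nat \<Rightarrow> bool list \<Rightarrow> bool list \<Rightarrow> (nat \<Rightarrow> real) set" where
  "lpm_polytope m r P Q = convex hull (ind_vec ` lpm_bases m r P Q)"

definition edges_of :: "'a::real_vector set \<Rightarrow> 'a set set" where
  "edges_of S = {F. F face_of S \<and> (\<exists>a b. a \<noteq> b \<and> F = closed_segment a b)}"

text \<open>Unit box with lower-left corner (i,j). Height of the (i+1)-th East step of p
  (number of N steps preceding it).\<close>
definition hE :: "bool list \<Rightarrow> nat \<Rightarrow> nat" where
  "hE p i = card {k. k < length p \<and> p ! k \<and> length (filter Not (take k p)) \<le> i}"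

definition boxes :: "nat \<Rightarrow> bool list \<Rightarrow> bool list \<Rightarrow> (nat \<times> nat) set" where
  "boxes m l u = {(i, j). i < m \<and> hE l i \<le> j \<and> j < hE u i}"

definition label :: "nat \<times> nat \<Rightarrow> nat" where
  "label b = fst b + snd b + 1"

definition box_adj :: "nat \<times> nat \<Rightarrow> nat \<times> nat \<Rightarrow> bool" where
  "box_adj a b \<longleftrightarrow> (fst a = fst b \<and> (snd b = Suc (snd a) \<or> snd a = Suc (snd b)))
                   \<or> (snd a = snd b \<and> (fst b = Suc (fst a) \<or> fst a = Suc (fst b)))"

definition box_connected :: "(nat \<times> nat) set \<Rightarrow> bool" where
  "box_connected S \<longleftrightarrow>
     (\<forall>a\<in>S. \<forall>b\<in>S. (\<lambda>x y. x \<in> S \<and> y \<in> S \<and> box_adj x y)\<^sup>*\<^sup>* a b)"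

text \<open>Skew shape (in the orientation of [P,Q], where rows/columns grow to the NE):
  a set of boxes that is convex for the order (i,j) <= (i',j') iff i <= i' and j >= j',
  i.e. a difference of two order ideals; equivalently each column is an interval and the
  lower/upper ends of the columns weakly increase.\<close>
definition skew_shape :: "(nat \<times> nat) set \<Rightarrow> bool" where
  "skew_shape S \<longleftrightarrow> finite S \<and>
     (\<forall>i j i' j' a b. (i, j) \<in> S \<longrightarrow> (i', j') \<in> S \<longrightarrow> i \<le> a \<longrightarrow> a \<le> i'
         \<longrightarrow> j' \<le> b \<longrightarrow> b \<le> j \<longrightarrow> (a, b) \<in> S)"

definition has_2x2 :: "(nat \<times> nat) set \<Rightarrow> bool" where
  "has_2x2 S \<longleftrightarrow> (\<exists>i j. (i, j) \<in> S \<and> (Suc i, j) \<in> S \<and> (i, Suc j) \<in> S \<and> (Suc i, Suc j) \<in> S)"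

definition border_strip :: "(nat \<times> nat) set \<Rightarrow> bool" where
  "border_strip S \<longleftrightarrow> S \<noteq> {} \<and> skew_shape S \<and> box_connected S \<and> \<not> has_2x2 S"

definition block :: "nat \<Rightarrow> bool list \<Rightarrow> bool list \<Rightarrow> (nat \<times> nat) set \<Rightarrow> bool" where
  "block m P Q S \<longleftrightarrow> border_strip S \<and> S \<subseteq> boxes m P Q"

text \<open>Clones: equal as labelled tableaux, differing only in position; i.e. one is a
  translate of the other by a vector (d,-d) (which preserves the labels i+j+1).\<close>
definition clones :: "(nat \<times> nat) set \<Rightarrow> (nat \<times> nat) set \<Rightarrow> bool" where
  "clones S T \<longleftrightarrow> (\<exists>d::int.
      (\<forall>(i, j)\<in>S. 0 \<le> int i + d \<and> 0 \<le> int j - d) \<and>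
      T = (\<lambda>(i, j). (nat (int i + d), nat (int j - d))) ` S)"

definition outside_corners :: "bool list \<Rightarrow> bool list \<Rightarrow> (nat \<times> nat) set" where
  "outside_corners P Q =
     {pt P k | k. 0 < k \<and> k < length P \<and> P ! (k - 1) \<and> \<not> P ! k} \<union>
     {pt Q k | k. 0 < k \<and> k < length Q \<and> \<not> Q ! (k - 1) \<and> Q ! k}"

text \<open>Maximal continuous intersections of l and u: maximal intervals [a,b] of step
  counts on which the two paths are at the same point; we record each as the set of
  lattice points it consists of.\<close>
definition max_intersection_intervals :: "bool list \<Rightarrow> bool list \<Rightarrow> (nat \<times> nat) set" where
  "max_intersection_intervals l u =
     {(a, b). a \<le> b \<and> b \<le> length l \<and> (\<forall>k. a \<le> k \<and> k \<le> b \<longrightarrow> pt l k = pt u k)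
        \<and> (a = 0 \<or> pt l (a - 1) \<noteq> pt u (a - 1))
        \<and> (b = length l \<or> pt l (Suc b) \<noteq> pt u (Suc b))}"

definition max_intersections :: "bool list \<Rightarrow> bool list \<Rightarrow> (nat \<times> nat) set set" where
  "max_intersections l u = (\<lambda>(a, b). {pt l k | k. a \<le> k \<and> k \<le> b}) ` max_intersection_intervals l u"

type_synonym tiled_region = "bool list \<times> bool list \<times> (nat \<times> nat) set set"

definition block_tiled_region ::
  "nat \<Rightarrow> nat \<Rightarrow> bool list \<Rightarrow> bool list \<Rightarrow> tiled_region \<Rightarrow> bool" where
  "block_tiled_region m r P Q R \<longleftrightarrow> (case R of (l, u, \<tau>) \<Rightarrow>
     lattice_path m r l \<and> lattice_path m r u \<and> in_region P Q l \<and> in_region P Q u \<and>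
     never_above l u \<and>
     \<comment> \<open>(1)\<close>
     (\<forall>I \<in> max_intersections l u. I \<inter> (outside_corners P Q \<union> {(0,0), (m,r)}) \<noteq> {}) \<and>
     \<comment> \<open>(2)\<close>
     (\<forall>S\<in>\<tau>. block m P Q S) \<and>
     (\<forall>S\<in>\<tau>. \<forall>T\<in>\<tau>. S \<noteq> T \<longrightarrow> S \<inter> T = {}) \<and>
     \<Union>\<tau> = boxes m l u \<and>
     \<comment> \<open>(3)\<close>
     (\<forall>S\<in>\<tau>. \<forall>T\<in>\<tau>. (\<exists>x\<in>S. \<exists>y\<in>T. label x = label y) \<longrightarrow> clones S T))"

definition block_tiled_band ::
  "nat \<Rightarrow> nat \<Rightarrow> bool list \<Rightarrow> bool list \<Rightarrow> tiled_region \<Rightarrow> bool" where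
  "block_tiled_band m r P Q R \<longleftrightarrow>
     block_tiled_region m r P Q R \<and> \<not> has_2x2 (boxes m (fst R) (fst (snd R)))"

text \<open>Same family: same set of maximal continuous intersections and the same clones
  constituting them (a bijection between the tilings matching clones).\<close>
definition same_family :: "tiled_region \<Rightarrow> tiled_region \<Rightarrow> bool" where
  "same_family R1 R2 \<longleftrightarrow> (case R1 of (l1, u1, \<tau>1) \<Rightarrow> case R2 of (l2, u2, \<tau>2) \<Rightarrow>
     max_intersections l1 u1 = max_intersections l2 u2 \<and>
     (\<exists>g. bij_betw g \<tau>1 \<tau>2 \<and> (\<forall>S\<in>\<tau>1. clones S (g S))))"

definition block_tiled_bottom ::
  "nat \<Rightarrow> nat \<Rightarrow> bool list \<Rightarrow> bool list \<Rightarrow> tiled_region \<Rightarrow> bool" where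
  "block_tiled_bottom m r P Q R \<longleftrightarrow> block_tiled_band m r P Q R \<and>
     (\<forall>R'. block_tiled_band m r P Q R' \<and> same_family R R' \<longrightarrow>
        never_above (fst R) (fst R') \<and> never_above (fst (snd R)) (fst (snd R')))"

end

theory Submission
  imports Defs
begin


lemma ht_def2: "ht p k = length (filter id (take k p))"
  by (simp add: ht_def pt_def)

definition gE :: "bool list \<Rightarrow> nat \<Rightarrow> nat" where
  "gE p k = length (filter Not (take k p))"

lemma pt_eq: "pt p k = (gE p k, ht p k)"
  by (simp add: pt_def gE_def ht_def2)

lemma ht_0[simp]: "ht p 0 = 0" by (simp add: ht_def2)
lemma gE_0[simp]: "gE p 0 = 0" by (simp add: gE_def)

lemma ht_Suc: "k < length p \<Longrightarrow> ht p (Suc k) = ht p k + (if p!k then 1 else 0)"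
  by (simp add: ht_def2 take_Suc_conv_app_nth)

lemma gE_Suc: "k < length p \<Longrightarrow> gE p (Suc k) = gE p k + (if p!k then 0 else 1)"
  by (simp add: gE_def take_Suc_conv_app_nth)

lemma ht_ge_len: "length p \<le> k \<Longrightarrow> ht p k = length (filter id p)"
  by (simp add: ht_def2)

lemma gE_ge_len: "length p \<le> k \<Longrightarrow> gE p k = length (filter Not p)"
  by (simp add: gE_def)

lemma gE_ht: "k \<le> length p \<Longrightarrow> gE p k + ht p k = k"
proof -
  assume "k \<le> length p"
  have "length (filter Not (take k p)) + length (filter id (take k p)) = length (take k p)"
    using sum_length_filter_compl[of id "take k p"] by (simp add: comp_def)
  then show ?thesis using \<open>k \<le> length p\<close> by (simp add: gE_def ht_def2)
qed

lemma ht_le: "ht p k \<le> k"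
  unfolding ht_def2 by (metis length_filter_le length_take min.bounded_iff nle_le order_trans)

lemma ht_mono: "k \<le> k' \<Longrightarrow> ht p k \<le> ht p k'"
proof -
  assume "k \<le> k'"
  then have "take k p = take k (take k' p)" by (simp add: min_def)
  then have "filter id (take k p) = filter id (take k (take k' p))" by simp
  moreover have "length (filter id (take k (take k' p))) \<le> length (filter id (take k' p))"
    by (metis append_take_drop_id filter_append le_add1 length_append)
  ultimately show ?thesis by (simp add: ht_def2)
qed

lemma gE_mono: "k \<le> k' \<Longrightarrow> gE p k \<le> gE p k'"
proof -
  assume "k \<le> k'"
  then have "take k p = take k (take k' p)" by (simp add: min_def)
  then have "filter Not (take k p) = filter Not (take k (take k' p))" by simp
  moreover have "length (filter Not (take k (take k' p))) \<le> length (filter Not (take k' p))"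
    by (metis append_take_drop_id filter_append le_add1 length_append)
  ultimately show ?thesis by (simp add: gE_def)
qed

lemma ht_Suc_le: "ht p (Suc k) \<le> Suc (ht p k)"
proof (cases "k < length p")
  case True then show ?thesis by (simp add: ht_Suc)
next
  case False then show ?thesis by (simp add: ht_ge_len)
qed

lemma step_iff: "k < length p \<Longrightarrow> p!k \<longleftrightarrow> ht p (Suc k) = Suc (ht p k)"
  by (simp add: ht_Suc)

lemma lattice_path_ht: "lattice_path m r p \<Longrightarrow> length p \<le> k \<Longrightarrow> ht p k = r"
  by (simp add: lattice_path_def ht_ge_len)

lemma lattice_path_gE: "lattice_path m r p \<Longrightarrow> gE p k \<le> m"
proof -
  assume a: "lattice_path m r p"
  have "gE p k \<le> gE p (length p)"
  proof (cases "k \<le> length p")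
    case True then show ?thesis by (rule gE_mono)
  next
    case False then show ?thesis by (simp add: gE_ge_len)
  qed
  also have "\<dots> = m" using gE_ht[of "length p" p] a
    by (simp add: lattice_path_def ht_ge_len)
  finally show ?thesis .
qed

lemma eq_from_ht:
  assumes "length p = length q" "\<And>k. k \<le> length p \<Longrightarrow> ht p k = ht q k"
  shows "p = q"
proof (rule nth_equalityI)
  show "length p = length q" by fact
  fix i assume "i < length p"
  then show "p ! i = q ! i" using assms step_iff[of i p] step_iff[of i q]
    by (metis Suc_leI less_imp_le_nat)
qed

lemma length_path_of[simp]: "length (path_of m r B) = m + r"
  by (simp add: path_of_def)

lemma nth_path_of: "k < m + r \<Longrightarrow> path_of m r B ! k = (Suc k \<in> B)"
  by (simp add: path_of_def)

lemma Npos_sub: "Npos p \<subseteq> {1..length p}"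
  by (auto simp: Npos_def)

lemma path_of_Npos: "length p = m + r \<Longrightarrow> path_of m r (Npos p) = p"
  by (rule nth_equalityI) (auto simp: path_of_def Npos_def)

lemma Npos_path_of: "B \<subseteq> {1..m+r} \<Longrightarrow> Npos (path_of m r B) = B"
proof
  show "Npos (path_of m r B) \<subseteq> B" by (auto simp: Npos_def path_of_def)
  assume "B \<subseteq> {1..m+r}"
  show "B \<subseteq> Npos (path_of m r B)"
  proof
    fix z assume z: "z \<in> B"
    then obtain k where "z = Suc k" "k < m + r" using \<open>B \<subseteq> {1..m+r}\<close>
      by (metis Suc_le_eq atLeastAtMost_iff not0_implies_Suc not_one_le_zero subset_iff)
    then show "z \<in> Npos (path_of m r B)" using z by (auto simp: Npos_def path_of_def)
  qed
qed

lemma card_Npos: "card (Npos p) = length (filter id p)"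
proof -
  have "Npos p = Suc ` {k. k < length p \<and> p ! k}" by (auto simp: Npos_def)
  then have "card (Npos p) = card {k. k < length p \<and> p ! k}" by (simp add: card_image)
  then show ?thesis by (simp add: length_filter_conv_card)
qed

lemma ht_path_of:
  assumes "B \<subseteq> {1..m+r}" "k \<le> m + r"
  shows "ht (path_of m r B) k = card {z\<in>B. z \<le> k}"
  using assms(2)
proof (induction k)
  case 0
  have "{z\<in>B. z \<le> 0} = {}" using assms(1) by auto
  then show ?case by simp
next
  case (Suc k)
  have fin: "finite {z\<in>B. z \<le> k}" by simp
  have "{z\<in>B. z \<le> Suc k} = (if Suc k \<in> B then insert (Suc k) {z\<in>B. z \<le> k} else {z\<in>B. z \<le> k})"
    by (auto simp: le_Suc_eq)
  then have "card {z\<in>B. z \<le> Suc k} = card {z\<in>B. z \<le> k} + (if Suc k \<in> B then 1 else 0)"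
    using fin by (auto)
  then show ?case using Suc by (simp add: ht_Suc nth_path_of)
qed

lemma lattice_path_path_of:
  assumes "B \<subseteq> {1..m+r}" "card B = r"
  shows "lattice_path m r (path_of m r B)"
proof -
  have "ht (path_of m r B) (m+r) = card {z\<in>B. z \<le> m+r}" using ht_path_of[OF assms(1)] by simp
  also have "{z\<in>B. z \<le> m+r} = B" using assms(1) by auto
  finally show ?thesis using assms by (simp add: lattice_path_def ht_ge_len)
qed

lemma ht_card: "ht p K = card {k. k < K \<and> k < length p \<and> p ! k}"
proof -
  have "ht p K = card {k. k < length (take K p) \<and> take K p ! k}"
    by (simp add: ht_def2 length_filter_conv_card)
  also have "{k. k < length (take K p) \<and> take K p ! k} = {k. k < K \<and> k < length p \<and> p ! k}"
    by auto
  finally show ?thesis .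
qed

lemma hE_iff:
  assumes lp: "lattice_path m r p" and im: "i < m"
  shows "hE p i \<le> j \<longleftrightarrow> ht p (i+j+1) \<le> j"
proof -
  define K where "K = i + j + 1"
  define A where "A = {k. k < length p \<and> p ! k \<and> gE p k \<le> i}"
  have hE: "hE p i = card A" by (simp add: hE_def A_def gE_def)
  have finA: "finite A" by (simp add: A_def)
  have len: "length p = m + r" using lp by (simp add: lattice_path_def)
  have htlen: "card {k. k < length p \<and> p ! k} = r"
  proof -
    have "length (filter id p) = r" using lp by (simp add: lattice_path_def)
    moreover have "length (filter id p) = card {k. k < length p \<and> p ! k}"
      using length_filter_conv_card[of id p] by simp
    ultimately show ?thesis by simp
  qed
  have Asub: "A \<subseteq> {k. k < length p \<and> p ! k}" by (auto simp: A_def)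
  show ?thesis
  proof
    assume h: "hE p i \<le> j"
    show "ht p (i+j+1) \<le> j"
    proof (rule ccontr)
      assume c: "\<not> ht p (i+j+1) \<le> j"
      show False
      proof (cases "K \<le> length p")
        case True
        have "gE p K + ht p K = K" using gE_ht[OF True] .
        then have g: "gE p K \<le> i" using c by (simp add: K_def)
        have "{k. k < K \<and> k < length p \<and> p ! k} \<subseteq> A"
        proof
          fix k assume "k \<in> {k. k < K \<and> k < length p \<and> p ! k}"
          then have "k < K" "k < length p" "p ! k" by auto
          moreover have "gE p k \<le> gE p K" using \<open>k < K\<close> by (simp add: gE_mono)
          ultimately show "k \<in> A" using g by (simp add: A_def)
        qed
        then have "ht p K \<le> card A" unfolding ht_card by (rule card_mono[OF finA])
        then show False using h c hE by (simp add: K_def)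
      next
        case False
        then have "ht p K = r" using lattice_path_ht[OF lp] by simp
        then show False using c False len im by (simp add: K_def)
      qed
    qed
  next
    assume h: "ht p (i+j+1) \<le> j"
    show "hE p i \<le> j"
    proof (cases "K \<le> length p")
      case True
      have "gE p K + ht p K = K" using gE_ht[OF True] .
      then have g: "i < gE p K" using h unfolding K_def by linarith
      have "A \<subseteq> {k. k < K \<and> k < length p \<and> p ! k}"
      proof
        fix k assume "k \<in> A"
        then have k: "k < length p" "p ! k" "gE p k \<le> i" unfolding A_def by auto
        have "k < K"
        proof (rule ccontr)
          assume "\<not> k < K"
          then have "gE p K \<le> gE p k" using gE_mono[of K k p] by linarith
          then show False using g k(3) by linarith
        qed
        then show "k \<in> {k. k < K \<and> k < length p \<and> p ! k}" using k by blast
      qed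
      moreover have "finite {k. k < K \<and> k < length p \<and> p ! k}" by simp
      ultimately have "card A \<le> ht p K" unfolding ht_card using card_mono by blast
      then show ?thesis using h hE unfolding K_def by linarith
    next
      case False
      then have "ht p K = r" using lattice_path_ht[OF lp, of K] by linarith
      moreover have "card A \<le> r" using card_mono[OF _ Asub] htlen by simp
      ultimately show ?thesis using h hE unfolding K_def by linarith
    qed
  qed
qed



lemma boxes_iff:
  assumes "lattice_path m r l" "lattice_path m r u"
  shows "(i, j) \<in> boxes m l u \<longleftrightarrow> i < m \<and> ht l (i+j+1) \<le> j \<and> j < ht u (i+j+1)"
  using hE_iff[OF assms(1), of i j] hE_iff[OF assms(2), of i j]
  by (auto simp: boxes_def not_le)

lemma boxes_iff':
  assumes "lattice_path m r l" "lattice_path m r u"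
  shows "x \<in> boxes m l u \<longleftrightarrow> fst x < m \<and> ht l (label x) \<le> snd x \<and> snd x < ht u (label x)"
  using boxes_iff[OF assms, of "fst x" "snd x"] by (simp add: label_def)

lemma box_at:
  assumes l: "lattice_path m r l" and u: "lattice_path m r u" and k: "ht l k < ht u k"
  shows "(k - ht u k, ht u k - 1) \<in> boxes m l u"
proof -
  have len: "length l = m + r" "length u = m + r" using l u by (auto simp: lattice_path_def)
  have kn: "k \<le> m + r"
  proof (rule ccontr)
    assume "\<not> k \<le> m + r"
    then show False using lattice_path_ht[OF l] lattice_path_ht[OF u] k len by simp
  qed
  have gl: "gE l k + ht l k = k" "gE u k + ht u k = k" using gE_ht kn len by auto
  have "gE l k \<le> m" using lattice_path_gE[OF l] .
  then have im: "k - ht u k < m" using gl k by linarith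
  have hu1: "1 \<le> ht u k" using k by simp
  have hk: "ht u k \<le> k" by (rule ht_le)
  have e: "k - ht u k + (ht u k - 1) + 1 = k" using hu1 hk by simp
  show ?thesis unfolding boxes_iff[OF l u] e using im k hu1 by simp
qed

lemma box_label:
  assumes l: "lattice_path m r l" and u: "lattice_path m r u" and x: "x \<in> boxes m l u"
  shows "ht l (label x) < ht u (label x)"
  using x boxes_iff'[OF l u, of x] by simp

lemma box_eq:
  assumes l: "lattice_path m r l" and u: "lattice_path m r u"
    and x: "x \<in> boxes m l u" and y: "y \<in> boxes m l u" and lab: "label x = label y"
    and d: "ht u (label x) \<le> Suc (ht l (label x))"
  shows "x = y"
proof -
  have "ht l (label x) \<le> snd x" "snd x < ht u (label x)" using x boxes_iff'[OF l u] by auto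
  moreover have "ht l (label x) \<le> snd y" "snd y < ht u (label x)" using y boxes_iff'[OF l u] lab by auto
  ultimately have "snd x = snd y" using d by linarith
  then show ?thesis using lab by (simp add: label_def prod_eq_iff)
qed

lemma box_eq_at:
  assumes l: "lattice_path m r l" and u: "lattice_path m r u"
    and x: "x \<in> boxes m l u" and d: "ht u (label x) \<le> Suc (ht l (label x))"
  shows "x = (label x - ht u (label x), ht u (label x) - 1)"
proof -
  have k: "ht l (label x) < ht u (label x)" using box_label[OF l u x] .
  have b: "(label x - ht u (label x), ht u (label x) - 1) \<in> boxes m l u" by (rule box_at[OF l u k])
  have hu1: "1 \<le> ht u (label x)" using k by simp
  have hk: "ht u (label x) \<le> label x" by (rule ht_le)
  have "label (label x - ht u (label x), ht u (label x) - 1) = label x"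
    using hu1 hk by (simp add: label_def)
  then show ?thesis using box_eq[OF l u x b] d by simp
qed

lemma two_by_two:
  assumes l: "lattice_path m r l" and u: "lattice_path m r u" and c: "ht l c + 2 \<le> ht u c"
  shows "has_2x2 (boxes m l u)"
proof -
  have len: "length l = m + r" "length u = m + r" using l u by (auto simp: lattice_path_def)
  have kn: "c \<le> m + r"
  proof (rule ccontr)
    assume "\<not> c \<le> m + r"
    then show False using lattice_path_ht[OF l] lattice_path_ht[OF u] c len by simp
  qed
  have gl: "gE l c + ht l c = c" "gE u c + ht u c = c" using gE_ht kn len by auto
  have "gE l c \<le> m" using lattice_path_gE[OF l] .
  have hc: "ht u c \<le> c" by (rule ht_le)
  define i where "i = c - ht u c"
  define j where "j = ht u c - 2"
  have im: "Suc i < m" using gl \<open>gE l c \<le> m\<close> c by (simp add: i_def)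
  have c1: "i + j + 1 = c - 1" "Suc i + j + 1 = c" "i + Suc j + 1 = c" "Suc i + Suc j + 1 = Suc c"
    using c hc by (auto simp: i_def j_def)
  have c0: "Suc (c - 1) = c" using c hc by simp
  have a1: "ht l (c - 1) \<le> ht l c" "ht u c \<le> Suc (ht u (c - 1))"
    using ht_mono[of "c - 1" c l] ht_Suc_le[of u "c - 1"] c0 by auto
  have a2: "ht l (Suc c) \<le> Suc (ht l c)" "ht u c \<le> ht u (Suc c)"
    using ht_Suc_le[of l c] ht_mono[of c "Suc c" u] by auto
  have "(i, j) \<in> boxes m l u" unfolding boxes_iff[OF l u] c1 using im a1 c by (simp add: j_def; linarith)
  moreover have "(Suc i, j) \<in> boxes m l u" unfolding boxes_iff[OF l u] c1 using im c by (simp add: j_def; linarith)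
  moreover have "(i, Suc j) \<in> boxes m l u" unfolding boxes_iff[OF l u] c1 using im c by (simp add: j_def; linarith)
  moreover have "(Suc i, Suc j) \<in> boxes m l u" unfolding boxes_iff[OF l u] c1 using im a2 c by (simp add: j_def; linarith)
  ultimately show ?thesis unfolding has_2x2_def by blast
qed

lemma two_by_two_conv:
  assumes l: "lattice_path m r l" and u: "lattice_path m r u" and h: "has_2x2 (boxes m l u)"
  shows "\<exists>c. ht l c + 2 \<le> ht u c"
proof -
  obtain i j where "(Suc i, j) \<in> boxes m l u" "(i, Suc j) \<in> boxes m l u"
    using h unfolding has_2x2_def by blast
  then have "ht l (i+j+2) \<le> j" "Suc j < ht u (i+j+2)" unfolding boxes_iff[OF l u] by auto
  then show ?thesis by (intro exI[of _ "i+j+2"]) simp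
qed

lemma adj_label: "box_adj a b \<Longrightarrow> label b = Suc (label a) \<or> label a = Suc (label b)"
  by (auto simp: box_adj_def label_def)

lemma disconnected:
  assumes l: "lattice_path m r l" and u: "lattice_path m r u"
    and k: "ht u k \<le> ht l k"
    and x: "x \<in> boxes m l u" "label x < k" and y: "y \<in> boxes m l u" "k < label y"
  shows "\<not> box_connected (boxes m l u)"
proof
  assume "box_connected (boxes m l u)"
  then have rt: "(\<lambda>a b. a \<in> boxes m l u \<and> b \<in> boxes m l u \<and> box_adj a b)\<^sup>*\<^sup>* x y"
    using x y unfolding box_connected_def by blast
  have "label y < k" using rt
  proof (induction rule: rtranclp_induct)
    case base then show ?case using x by simp
  next
    case (step a b)
    have "label b \<noteq> k" using box_label[OF l u, of b] step k by auto
    then show ?case using adj_label[of a b] step by auto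
  qed
  then show False using y by simp
qed



definition swap_rel :: "nat \<Rightarrow> nat \<Rightarrow> bool list \<Rightarrow> bool list \<Rightarrow> bool" where
  "swap_rel a b l u \<longleftrightarrow> (\<forall>k. ht u k = ht l k + (if a \<le> k \<and> k < b then 1 else 0))"

lemma never_above_all:
  assumes l: "lattice_path m r l" and u: "lattice_path m r u" and na: "never_above l u"
  shows "ht l k \<le> ht u k"
proof (cases "k \<le> length l")
  case True then show ?thesis using na by (simp add: never_above_def)
next
  case False
  then have "length l \<le> k" "length u \<le> k" using l u by (auto simp: lattice_path_def)
  then show ?thesis using lattice_path_ht[OF l] lattice_path_ht[OF u] by simp
qed

lemma ht_eq_out:
  assumes l: "lattice_path m r l" and u: "lattice_path m r u" and "m + r \<le> k"
  shows "ht l k = ht u k"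
  using lattice_path_ht[OF l] lattice_path_ht[OF u] assms l u by (simp add: lattice_path_def)

lemma dom_swap:
  assumes l: "lattice_path m r l" and u: "lattice_path m r u" and na: "never_above l u"
    and ne: "boxes m l u \<noteq> {}" and n2: "\<not> has_2x2 (boxes m l u)"
    and bc: "box_connected (boxes m l u)"
  shows "\<exists>a b. 1 \<le> a \<and> a < b \<and> b \<le> m + r \<and> swap_rel a b l u"
proof -
  define D where "D = {k. ht l k < ht u k}"
  have le1: "ht u k \<le> ht l k + 1" for k
  proof (rule ccontr)
    assume "\<not> ht u k \<le> ht l k + 1"
    then have "ht l k + 2 \<le> ht u k" by simp
    then show False using two_by_two[OF l u] n2 by blast
  qed
  have ge: "ht l k \<le> ht u k" for k by (rule never_above_all[OF l u na])
  have val: "ht u k = ht l k + (if k \<in> D then 1 else 0)" for k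
    using le1[of k] ge[of k] by (auto simp: D_def)
  obtain x where x: "x \<in> boxes m l u" using ne by blast
  have Dne: "label x \<in> D" using box_label[OF l u x] by (simp add: D_def)
  have out: "k \<notin> D" if "m + r \<le> k" for k using ht_eq_out[OF l u that] by (simp add: D_def)
  have zero: "0 \<notin> D" by (simp add: D_def)
  define a where "a = (LEAST k. k \<in> D)"
  have aD: "a \<in> D" using Dne unfolding a_def by (rule LeastI)
  have amin: "k < a \<Longrightarrow> k \<notin> D" for k unfolding a_def using not_less_Least by blast
  have a1: "1 \<le> a" using aD zero by (cases a) auto
  have an: "a < m + r" using aD out by (meson not_le)
  define b where "b = (LEAST k. a < k \<and> k \<notin> D)"
  have ex: "a < m + r \<and> m + r \<notin> D" using an out by simp
  have bprop: "a < b \<and> b \<notin> D" unfolding b_def using ex by (rule LeastI)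
  have bmin: "a < k \<Longrightarrow> k < b \<Longrightarrow> k \<in> D" for k unfolding b_def using not_less_Least by blast
  have bn: "b \<le> m + r" unfolding b_def using ex by (rule Least_le)
  have Dchar: "k \<in> D \<longleftrightarrow> a \<le> k \<and> k < b" for k
  proof
    assume kD: "k \<in> D"
    have "a \<le> k" using amin kD by (meson not_le)
    moreover have "k < b"
    proof (rule ccontr)
      assume "\<not> k < b"
      then have kb: "b < k" using bprop kD by (metis le_neq_implies_less not_le)
      have bx1: "(a - ht u a, ht u a - 1) \<in> boxes m l u" using box_at[OF l u] aD by (simp add: D_def)
      have bx2: "(k - ht u k, ht u k - 1) \<in> boxes m l u" using box_at[OF l u] kD by (simp add: D_def)
      have lab1: "label (a - ht u a, ht u a - 1) = a"
        using aD ht_le[of u a] by (simp add: label_def D_def)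
      have lab2: "label (k - ht u k, ht u k - 1) = k"
        using kD ht_le[of u k] by (simp add: label_def D_def)
      have "ht u b \<le> ht l b" using bprop by (simp add: D_def)
      then have "\<not> box_connected (boxes m l u)"
        using disconnected[OF l u _ bx1 _ bx2] lab1 lab2 bprop kb by simp
      then show False using bc by simp
    qed
    ultimately show "a \<le> k \<and> k < b" by simp
  next
    assume "a \<le> k \<and> k < b"
    then show "k \<in> D" using aD bmin by (cases "k = a") auto
  qed
  have "swap_rel a b l u" unfolding swap_rel_def using val Dchar by simp
  then show ?thesis using a1 bprop bn by blast
qed

lemma swap_D:
  assumes "swap_rel a b l u"
  shows "ht u k = (if a \<le> k \<and> k < b then Suc (ht l k) else ht l k)"
  using assms unfolding swap_rel_def by simp

lemma swap_never_above:
  assumes "swap_rel a b l u" shows "never_above l u"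
  using swap_D[OF assms] unfolding never_above_def by simp

lemma swap_ne:
  assumes l: "lattice_path m r l" and u: "lattice_path m r u" and s: "swap_rel a b l u" and ab: "a < b"
  shows "boxes m l u \<noteq> {}"
  using box_at[OF l u, of a] swap_D[OF s, of a] ab by auto

lemma swap_no2x2:
  assumes l: "lattice_path m r l" and u: "lattice_path m r u" and s: "swap_rel a b l u"
  shows "\<not> has_2x2 (boxes m l u)"
proof
  assume "has_2x2 (boxes m l u)"
  then obtain c where "ht l c + 2 \<le> ht u c" using two_by_two_conv[OF l u] by blast
  then show False using swap_D[OF s, of c] by (auto split: if_splits)
qed

lemma hE_mono: "i \<le> i' \<Longrightarrow> hE p i \<le> hE p i'"
  unfolding hE_def by (rule card_mono) auto

lemma skew_boxes: "skew_shape (boxes m l u)"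
proof -
  have fin: "finite (boxes m l u)"
  proof (rule finite_subset)
    show "boxes m l u \<subseteq> {..<m} \<times> {..<hE u m}"
    proof
      fix x assume "x \<in> boxes m l u"
      then obtain i j where x: "x = (i, j)" "i < m" "j < hE u i" unfolding boxes_def by auto
      then have "hE u i \<le> hE u m" using hE_mono[of i m u] by simp
      then show "x \<in> {..<m} \<times> {..<hE u m}" using x by auto
    qed
  qed simp
  show ?thesis unfolding skew_shape_def
  proof (intro conjI fin allI impI)
    fix i j i' j' x y
    assume a: "(i, j) \<in> boxes m l u" "(i', j') \<in> boxes m l u" "i \<le> x" "x \<le> i'" "j' \<le> y" "y \<le> j"
    have "hE l x \<le> hE l i'" using a hE_mono by blast
    moreover have "hE u i \<le> hE u x" using a hE_mono by blast
    ultimately show "(x, y) \<in> boxes m l u" using a unfolding boxes_def by auto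
  qed
qed

lemma Suc_Npos: "Suc j \<in> Npos p \<longleftrightarrow> j < length p \<and> p ! j"
  by (auto simp: Npos_def)

lemma zero_Npos: "0 \<notin> Npos p"
  by (auto simp: Npos_def)

lemma swap_step:
  assumes l: "lattice_path m r l" and u: "lattice_path m r u" and s: "swap_rel a b l u"
    and ab: "1 \<le> a" "a < b" "b \<le> m + r" and j: "j < m + r"
  shows "(u ! j \<and> \<not> l ! j \<longleftrightarrow> Suc j = a) \<and> (l ! j \<and> \<not> u ! j \<longleftrightarrow> Suc j = b)
         \<and> (u ! j = l ! j \<longleftrightarrow> Suc j \<noteq> a \<and> Suc j \<noteq> b)"
proof -
  have len: "length l = m + r" "length u = m + r" using l u by (auto simp: lattice_path_def)
  have su: "ht u (Suc j) = ht u j + (if u ! j then 1 else 0)" using ht_Suc[of j u] j len by simp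
  have sl: "ht l (Suc j) = ht l j + (if l ! j then 1 else 0)" using ht_Suc[of j l] j len by simp
  define cj where "cj = (if a \<le> j \<and> j < b then 1 else 0::nat)"
  define cs where "cs = (if a \<le> Suc j \<and> Suc j < b then 1 else 0::nat)"
  define xu where "xu = (if u ! j then 1 else 0::nat)"
  define xl where "xl = (if l ! j then 1 else 0::nat)"
  have e1: "ht u j = ht l j + cj" using s unfolding swap_rel_def cj_def by simp
  have e2: "ht u (Suc j) = ht l (Suc j) + cs" using s unfolding swap_rel_def cs_def by simp
  have e: "xu + cj = xl + cs" using e1 e2 su sl unfolding xu_def xl_def by linarith
  consider "Suc j = a" | "Suc j = b" | "Suc j \<noteq> a" "Suc j \<noteq> b" by blast
  then show ?thesis
  proof cases
    case 1
    then have "cj = 0" "cs = 1" using ab by (auto simp: cj_def cs_def)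
    then have "u ! j" "\<not> l ! j" using e unfolding xu_def xl_def by (auto split: if_splits)
    then show ?thesis using 1 ab by auto
  next
    case 2
    then have "cj = 1" "cs = 0" using ab by (auto simp: cj_def cs_def)
    then have "\<not> u ! j" "l ! j" using e unfolding xu_def xl_def by (auto split: if_splits)
    then show ?thesis using 2 ab by auto
  next
    case 3
    then have "cj = cs" unfolding cj_def cs_def by (auto simp: le_Suc_eq)
    then have "u ! j = l ! j" using e unfolding xu_def xl_def by (auto split: if_splits)
    then show ?thesis using 3 by auto
  qed
qed

lemma swap_Npos:
  assumes l: "lattice_path m r l" and u: "lattice_path m r u" and s: "swap_rel a b l u"
    and ab: "1 \<le> a" "a < b" "b \<le> m + r"
  shows "Npos u - Npos l = {a}" "Npos l - Npos u = {b}"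
proof -
  have len: "length l = m + r" "length u = m + r" using l u by (auto simp: lattice_path_def)
  have st: "\<And>j. j < m + r \<Longrightarrow> (u ! j \<and> \<not> l ! j \<longleftrightarrow> Suc j = a) \<and> (l ! j \<and> \<not> u ! j \<longleftrightarrow> Suc j = b)"
    using swap_step[OF l u s ab] by blast
  have a': "Suc (a - 1) = a" "a - 1 < m + r" using ab by auto
  have b': "Suc (b - 1) = b" "b - 1 < m + r" using ab by auto
  show "Npos u - Npos l = {a}"
  proof
    show "Npos u - Npos l \<subseteq> {a}" using st len by (auto simp: Npos_def)
    show "{a} \<subseteq> Npos u - Npos l" using st[of "a - 1"] a' len Suc_Npos[of "a - 1" u] Suc_Npos[of "a - 1" l]
      by auto
  qed
  show "Npos l - Npos u = {b}"
  proof
    show "Npos l - Npos u \<subseteq> {b}" using st len by (auto simp: Npos_def)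
    show "{b} \<subseteq> Npos l - Npos u" using st[of "b - 1"] b' len Suc_Npos[of "b - 1" u] Suc_Npos[of "b - 1" l]
      by auto
  qed
qed

lemma Npos_swap:
  assumes l: "lattice_path m r l" and u: "lattice_path m r u"
    and d1: "Npos u - Npos l = {a}" and d2: "Npos l - Npos u = {b}" and ab: "a < b"
  shows "swap_rel a b l u \<and> 1 \<le> a \<and> b \<le> m + r"
proof -
  have len: "length l = m + r" "length u = m + r" using l u by (auto simp: lattice_path_def)
  have aN: "a \<in> Npos u" "b \<in> Npos l" using d1 d2 by auto
  then have a1: "1 \<le> a" "b \<le> m + r" using Npos_sub[of u] Npos_sub[of l] len by auto
  have sa0: "Suc (a - 1) = a" using a1 by simp
  have step: "u ! j = l ! j" if "j < m + r" "Suc j \<noteq> a" "Suc j \<noteq> b" for j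
  proof -
    have "Suc j \<notin> Npos u - Npos l" "Suc j \<notin> Npos l - Npos u" using d1 d2 that by auto
    then show ?thesis using that len by (auto simp: Npos_def)
  qed
  have sa: "u ! (a - 1) \<and> \<not> l ! (a - 1)"
  proof -
    have "Suc (a - 1) \<in> Npos u - Npos l" using d1 sa0 by simp
    then show ?thesis using Suc_Npos[of "a - 1" u] Suc_Npos[of "a - 1" l] len by auto
  qed
  have sb: "l ! (b - 1) \<and> \<not> u ! (b - 1)"
  proof -
    have "b \<noteq> 0" using ab by simp
    then have "Suc (b - 1) \<in> Npos l - Npos u" using d2 by simp
    then show ?thesis using Suc_Npos[of "b - 1" u] Suc_Npos[of "b - 1" l] len by auto
  qed
  have main: "k \<le> m + r \<Longrightarrow> ht u k = ht l k + (if a \<le> k \<and> k < b then 1 else 0)" for k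
  proof (induction k)
    case 0 then show ?case using a1 by simp
  next
    case (Suc k)
    then have k: "k < m + r" by simp
    have su: "ht u (Suc k) = ht u k + (if u ! k then 1 else 0)" using ht_Suc[of k u] k len by simp
    have sl: "ht l (Suc k) = ht l k + (if l ! k then 1 else 0)" using ht_Suc[of k l] k len by simp
    have IH: "ht u k = ht l k + (if a \<le> k \<and> k < b then 1 else 0)" using Suc by simp
    consider "Suc k = a" | "Suc k = b" | "Suc k \<noteq> a" "Suc k \<noteq> b" by blast
    then show ?case
    proof cases
      case 1 then show ?thesis using su sl IH sa ab by auto
    next
      case 2 then show ?thesis using su sl IH sb ab by auto
    next
      case 3 then show ?thesis using su sl IH step[OF k] by (auto split: if_splits)
    qed
  qed
  have "ht u k = ht l k + (if a \<le> k \<and> k < b then 1 else 0)" for k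
  proof (cases "k \<le> m + r")
    case True then show ?thesis by (rule main)
  next
    case False then show ?thesis using ht_eq_out[OF l u, of k] a1 by simp
  qed
  then show ?thesis using a1 unfolding swap_rel_def by simp
qed



lemma swap_connected:
  assumes l: "lattice_path m r l" and u: "lattice_path m r u" and s: "swap_rel a b l u"
    and ab: "1 \<le> a" "a < b" "b \<le> m + r"
  shows "box_connected (boxes m l u)"
proof -
  define S where "S = boxes m l u"
  define bx where "bx k = (k - ht u k, ht u k - 1)" for k
  define R where "R x y = (x \<in> S \<and> y \<in> S \<and> box_adj x y)" for x y
  have len: "length l = m + r" "length u = m + r" using l u by (auto simp: lattice_path_def)
  have inD: "a \<le> k \<Longrightarrow> k < b \<Longrightarrow> ht u k = Suc (ht l k)" for k using swap_D[OF s, of k] by simp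
  have inS: "a \<le> k \<Longrightarrow> k < b \<Longrightarrow> bx k \<in> S" for k
    unfolding S_def bx_def using box_at[OF l u, of k] inD[of k] by simp
  have every: "x \<in> S \<Longrightarrow> x = bx (label x) \<and> a \<le> label x \<and> label x < b" for x
  proof -
    assume x: "x \<in> S"
    have "ht l (label x) < ht u (label x)" using box_label[OF l u] x by (simp add: S_def)
    then have ak: "a \<le> label x \<and> label x < b" using swap_D[OF s, of "label x"] by (auto split: if_splits)
    have "ht u (label x) \<le> Suc (ht l (label x))" using swap_D[OF s, of "label x"] by simp
    then have "x = bx (label x)" using box_eq_at[OF l u] x by (simp add: S_def bx_def)
    then show ?thesis using ak by simp
  qed
  have adj: "a \<le> k \<Longrightarrow> Suc k < b \<Longrightarrow> box_adj (bx k) (bx (Suc k))" for k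
  proof -
    assume k: "a \<le> k" "Suc k < b"
    then have kn: "k < m + r" using ab by simp
    have su: "ht u (Suc k) = ht u k + (if u ! k then 1 else 0)" using ht_Suc[of k u] kn len by simp
    have h1: "1 \<le> ht u k" using inD[of k] k by simp
    have h2: "ht u k \<le> k" by (rule ht_le)
    show ?thesis
    proof (cases "u ! k")
      case True
      then have "bx (Suc k) = (k - ht u k, ht u k)" using su h1 h2 by (simp add: bx_def)
      then show ?thesis using h1 by (simp add: bx_def box_adj_def)
    next
      case False
      then have "bx (Suc k) = (Suc (k - ht u k), ht u k - 1)" using su h1 h2 by (simp add: bx_def Suc_diff_le)
      then show ?thesis by (simp add: bx_def box_adj_def)
    qed
  qed
  have chain: "a \<le> k \<Longrightarrow> k \<le> k' \<Longrightarrow> k' < b \<Longrightarrow> R\<^sup>*\<^sup>* (bx k) (bx k') \<and> R\<^sup>*\<^sup>* (bx k') (bx k)" for k k'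
  proof (induction k')
    case 0 then show ?case by simp
  next
    case (Suc k')
    show ?case
    proof (cases "k = Suc k'")
      case True then show ?thesis by simp
    next
      case False
      then have kk: "k \<le> k'" using Suc by simp
      then have IH: "R\<^sup>*\<^sup>* (bx k) (bx k') \<and> R\<^sup>*\<^sup>* (bx k') (bx k)" using Suc by simp
      have r1: "R (bx k') (bx (Suc k'))" unfolding R_def
        using inS[of k'] inS[of "Suc k'"] adj[of k'] Suc kk by simp
      have r2: "R (bx (Suc k')) (bx k')" using r1 unfolding R_def box_adj_def by auto
      show ?thesis using IH r1 r2
        by (meson converse_rtranclp_into_rtranclp rtranclp.rtrancl_into_rtrancl)
    qed
  qed
  show ?thesis unfolding box_connected_def
  proof (intro ballI)
    fix x y assume x: "x \<in> boxes m l u" and y: "y \<in> boxes m l u"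
    have ex: "x = bx (label x) \<and> a \<le> label x \<and> label x < b" using every x by (simp add: S_def)
    have ey: "y = bx (label y) \<and> a \<le> label y \<and> label y < b" using every y by (simp add: S_def)
    have "R\<^sup>*\<^sup>* x y"
    proof (cases "label x \<le> label y")
      case True then show ?thesis using chain[of "label x" "label y"] ex ey by metis
    next
      case False then show ?thesis using chain[of "label y" "label x"] ex ey by (metis nat_le_linear)
    qed
    then show "(\<lambda>x y. x \<in> boxes m l u \<and> y \<in> boxes m l u \<and> box_adj x y)\<^sup>*\<^sup>* x y"
      unfolding R_def S_def .
  qed
qed

lemma boxes_sub:
  assumes P: "lattice_path m r P" and Q: "lattice_path m r Q"
    and l: "lattice_path m r l" and u: "lattice_path m r u"
    and "\<And>k. ht P k \<le> ht l k" "\<And>k. ht u k \<le> ht Q k"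
  shows "boxes m l u \<subseteq> boxes m P Q"
proof
  fix x assume "x \<in> boxes m l u"
  then show "x \<in> boxes m P Q" using assms boxes_iff'[OF l u] boxes_iff'[OF P Q]
    by (meson le_trans less_le_trans)
qed

lemma pt_len: "k \<le> length p \<Longrightarrow> pt p k = (k - ht p k, ht p k)"
  using gE_ht[of k p] by (simp add: pt_eq)

lemma pt_sum: "k \<le> length p \<Longrightarrow> fst (pt p k) + snd (pt p k) = k"
  using gE_ht[of k p] by (simp add: pt_eq)

lemma pt_eq_iff: "k \<le> length l \<Longrightarrow> k \<le> length u \<Longrightarrow> pt l k = pt u k \<longleftrightarrow> ht l k = ht u k"
  using pt_len[of k l] pt_len[of k u] by auto

lemma swap_cond1:
  assumes l: "lattice_path m r l" and u: "lattice_path m r u" and s: "swap_rel a b l u"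
    and ab: "1 \<le> a" "a < b" "b \<le> m + r"
  shows "\<forall>I \<in> max_intersections l u. I \<inter> (X \<union> {(0,0), (m,r)}) \<noteq> {}"
proof
  fix I assume "I \<in> max_intersections l u"
  then obtain x y where xy: "(x, y) \<in> max_intersection_intervals l u"
    and I: "I = {pt l k | k. x \<le> k \<and> k \<le> y}" unfolding max_intersections_def by auto
  have len: "length l = m + r" "length u = m + r" using l u by (auto simp: lattice_path_def)
  have yn: "x \<le> y" "y \<le> m + r" and eq: "\<And>k. x \<le> k \<and> k \<le> y \<Longrightarrow> pt l k = pt u k"
    and c1: "x = 0 \<or> pt l (x - 1) \<noteq> pt u (x - 1)"
    and c2: "y = length l \<or> pt l (Suc y) \<noteq> pt u (Suc y)"
    using xy len unfolding max_intersection_intervals_def by auto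
  have "(0, 0) \<in> I \<or> (m, r) \<in> I"
  proof (cases "x = 0")
    case True
    then have "pt l 0 \<in> I" unfolding I using yn by auto
    then show ?thesis by (simp add: pt_eq)
  next
    case False
    then have "ht l (x - 1) \<noteq> ht u (x - 1)" using c1 pt_eq_iff[of "x - 1" l u] len yn by auto
    then have x1: "a \<le> x - 1" "x - 1 < b" using swap_D[OF s, of "x - 1"] by (auto split: if_splits)
    have "ht l x = ht u x" using eq[of x] pt_eq_iff[of x l u] len yn by auto
    then have "\<not> (a \<le> x \<and> x < b)" using swap_D[OF s, of x] by auto
    then have xb: "x = b" using x1 False by linarith
    have "y = m + r"
    proof (rule ccontr)
      assume "y \<noteq> m + r"
      then have "pt l (Suc y) \<noteq> pt u (Suc y)" "Suc y \<le> m + r" using c2 len yn by auto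
      then have "ht l (Suc y) \<noteq> ht u (Suc y)" using pt_eq_iff[of "Suc y" l u] len by auto
      then have "Suc y < b" using swap_D[OF s, of "Suc y"] by (auto split: if_splits)
      then show False using xb yn by simp
    qed
    then have "pt l (m + r) \<in> I" unfolding I using yn by auto
    moreover have "pt l (m + r) = (m, r)" using pt_len[of "m + r" l] len lattice_path_ht[OF l, of "m+r"] by simp
    ultimately show ?thesis by simp
  qed
  then show "I \<inter> (X \<union> {(0,0), (m,r)}) \<noteq> {}" by auto
qed

lemma interval_in:
  assumes "(x, y) \<in> max_intersection_intervals l' u'" "length l' = n" "length l = n"
    and "{pt l k | k. c \<le> k \<and> k \<le> e} = {pt l' k | k. x \<le> k \<and> k \<le> y}"
    and "c \<le> k" "k \<le> e" "e \<le> n"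
  shows "pt l k = pt l' k \<and> pt l' k = pt u' k"
proof -
  have "pt l k \<in> {pt l' k | k. x \<le> k \<and> k \<le> y}" using assms(4-6) by blast
  then obtain k' where k': "x \<le> k'" "k' \<le> y" "pt l k = pt l' k'" by blast
  have yn: "y \<le> n" and eq: "\<And>k. x \<le> k \<and> k \<le> y \<Longrightarrow> pt l' k = pt u' k"
    using assms(1,2) unfolding max_intersection_intervals_def by auto
  have "k = k'" using pt_sum[of k l] pt_sum[of k' l'] k' yn assms by simp
  then show ?thesis using k' eq by simp
qed

lemma swap_bottom:
  assumes l: "lattice_path m r l" and u: "lattice_path m r u" and s: "swap_rel a b l u"
    and ab: "1 \<le> a" "a < b" "b \<le> m + r"
    and l': "lattice_path m r l'" and u': "lattice_path m r u'"
    and n2: "\<not> has_2x2 (boxes m l' u')"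
    and mi: "max_intersections l u = max_intersections l' u'"
    and cl: "clones (boxes m l u) (boxes m l' u')"
  shows "\<forall>k. ht l k = ht l' k \<and> ht u k = ht u' k"
proof -
  have len: "length l = m + r" "length u = m + r" "length l' = m + r" "length u' = m + r"
    using l u l' u' by (auto simp: lattice_path_def)
  have le1: "ht u' k \<le> Suc (ht l' k)" for k
  proof (rule ccontr)
    assume "\<not> ht u' k \<le> Suc (ht l' k)"
    then have "ht l' k + 2 \<le> ht u' k" by simp
    then show False using two_by_two[OF l' u'] n2 by blast
  qed
  have int1: "(0, a - 1) \<in> max_intersection_intervals l u"
    unfolding max_intersection_intervals_def
  proof (clarsimp, intro conjI allI impI)
    show "a - Suc 0 \<le> length l" using ab len by simp
    fix k assume "k \<le> a - Suc 0"
    then show "pt l k = pt u k" using pt_eq_iff[of k l u] swap_D[OF s, of k] len ab by auto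
  next
    have "ht l a \<noteq> ht u a" using swap_D[OF s, of a] ab by simp
    moreover have "Suc (a - Suc 0) = a" using ab by simp
    ultimately show "a - Suc 0 = length l \<or> pt l (Suc (a - Suc 0)) \<noteq> pt u (Suc (a - Suc 0))"
      by (simp add: pt_eq)
  qed
  have "(\<lambda>(x, y). {pt l k | k. x \<le> k \<and> k \<le> y}) (0, a - 1) \<in> max_intersections l u"
    unfolding max_intersections_def using int1 by (rule imageI)
  then have "{pt l k | k. 0 \<le> k \<and> k \<le> a - 1} \<in> max_intersections l' u'" using mi by simp
  then obtain x y where xy: "(x, y) \<in> max_intersection_intervals l' u'"
    and I1: "{pt l k | k. 0 \<le> k \<and> k \<le> a - 1} = {pt l' k | k. x \<le> k \<and> k \<le> y}"
    unfolding max_intersections_def by auto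
  have pre: "k \<le> a - 1 \<Longrightarrow> ht l k = ht l' k \<and> ht u k = ht u' k" for k
  proof -
    assume k: "k \<le> a - 1"
    have "pt l k = pt l' k \<and> pt l' k = pt u' k"
      by (rule interval_in[OF xy len(3) len(1) I1]) (use k ab in auto)
    then have "ht l k = ht l' k" "ht l' k = ht u' k"
      using pt_eq_iff[of k l l'] pt_eq_iff[of k l' u'] len k ab by auto
    moreover have "ht u k = ht l k" using swap_D[OF s, of k] k ab by auto
    ultimately show ?thesis by simp
  qed
  have int2: "(b, m + r) \<in> max_intersection_intervals l u"
    unfolding max_intersection_intervals_def
  proof (clarsimp, intro conjI allI impI)
    show "b \<le> m + r" "m + r \<le> length l" using ab len by auto
    fix k assume "b \<le> k \<and> k \<le> m + r"
    then show "pt l k = pt u k" using pt_eq_iff[of k l u] swap_D[OF s, of k] len ab by auto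
  next
    have "ht l (b - 1) \<noteq> ht u (b - 1)" using swap_D[OF s, of "b - 1"] ab by simp
    then show "b = 0 \<or> pt l (b - Suc 0) \<noteq> pt u (b - Suc 0)"
      by (simp add: pt_eq)
  qed (use len in simp)
  have "(\<lambda>(x, y). {pt l k | k. x \<le> k \<and> k \<le> y}) (b, m + r) \<in> max_intersections l u"
    unfolding max_intersections_def using int2 by (rule imageI)
  then have "{pt l k | k. b \<le> k \<and> k \<le> m + r} \<in> max_intersections l' u'" using mi by simp
  then obtain x2 y2 where xy2: "(x2, y2) \<in> max_intersection_intervals l' u'"
    and I2: "{pt l k | k. b \<le> k \<and> k \<le> m + r} = {pt l' k | k. x2 \<le> k \<and> k \<le> y2}"
    unfolding max_intersections_def by auto
  have suf: "b \<le> k \<Longrightarrow> k \<le> m + r \<Longrightarrow> ht l k = ht l' k \<and> ht u k = ht u' k" for k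
  proof -
    assume k: "b \<le> k" "k \<le> m + r"
    have "pt l k = pt l' k \<and> pt l' k = pt u' k"
      by (rule interval_in[OF xy2 len(3) len(1) I2]) (use k in auto)
    then have "ht l k = ht l' k" "ht l' k = ht u' k"
      using pt_eq_iff[of k l l'] pt_eq_iff[of k l' u'] len k by auto
    moreover have "ht u k = ht l k" using swap_D[OF s, of k] k by auto
    ultimately show ?thesis by simp
  qed
  obtain d :: int where dnn: "\<forall>(i, j)\<in>boxes m l u. 0 \<le> int i + d \<and> 0 \<le> int j - d"
    and T: "boxes m l' u' = (\<lambda>(i, j). (nat (int i + d), nat (int j - d))) ` boxes m l u"
    using cl unfolding clones_def by blast
  define bx where "bx k = (k - ht u k, ht u k - 1)" for k
  define bx' where "bx' k = (k - ht u' k, ht u' k - 1)" for k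
  define sg where "sg = (\<lambda>(i::nat, j::nat). (nat (int i + d), nat (int j - d)))"
  have inD: "a \<le> k \<Longrightarrow> k < b \<Longrightarrow> ht u k = Suc (ht l k)" for k using swap_D[OF s, of k] by simp
  have bxS: "a \<le> k \<Longrightarrow> k < b \<Longrightarrow> bx k \<in> boxes m l u" for k
    unfolding bx_def using box_at[OF l u, of k] inD[of k] by simp
  have lab: "a \<le> k \<Longrightarrow> k < b \<Longrightarrow> label (bx k) = k" for k
    using inD[of k] ht_le[of u k] by (simp add: bx_def label_def)
  have sgx: "a \<le> k \<Longrightarrow> k < b \<Longrightarrow> sg (bx k) = bx' k \<and> ht l' k < ht u' k" for k
  proof -
    assume k: "a \<le> k" "k < b"
    have nn: "0 \<le> int (k - ht u k) + d" "0 \<le> int (ht u k - 1) - d" using dnn bxS[OF k] by (auto simp: bx_def)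
    have inT: "sg (bx k) \<in> boxes m l' u'" using T bxS[OF k] unfolding sg_def by blast
    have "label (sg (bx k)) = label (bx k)" using nn by (simp add: sg_def bx_def label_def)
    then have lk: "label (sg (bx k)) = k" using lab[OF k] by simp
    have "sg (bx k) = bx' k" using box_eq_at[OF l' u' inT] le1 lk by (simp add: bx'_def)
    moreover have "ht l' k < ht u' k" using box_label[OF l' u' inT] lk by simp
    ultimately show ?thesis by simp
  qed
  have ha: "ht u' a = ht u a"
  proof -
    define c where "c = a - 1"
    have ac: "a = Suc c" using ab by (simp add: c_def)
    have pc: "ht l c = ht l' c" "ht u c = ht u' c" using pre[of c] by (auto simp: c_def)
    have uc: "ht u c = ht l c" using swap_D[OF s, of c] ac by simp
    have "ht l' a < ht u' a" using sgx[of a] ab by simp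
    moreover have "ht l' c \<le> ht l' a" "ht u' a \<le> Suc (ht u' c)" using ht_mono[of c a l'] ht_Suc_le[of u' c] ac by auto
    moreover have "ht l a < ht u a" using inD[of a] ab by simp
    moreover have "ht l c \<le> ht l a" "ht u a \<le> Suc (ht u c)" using ht_mono[of c a l] ht_Suc_le[of u c] ac by auto
    ultimately show ?thesis using pc uc by linarith
  qed
  have d0: "d = 0"
  proof -
    have "sg (bx a) = bx' a" using sgx[of a] ab by simp
    then have e: "nat (int (ht u a - 1) - d) = ht u' a - 1" by (simp add: sg_def bx_def bx'_def)
    have "0 \<le> int (ht u a - 1) - d" using dnn bxS[of a] ab by (auto simp: bx_def)
    then show ?thesis using e ha by linarith
  qed
  have mid: "a \<le> k \<Longrightarrow> k < b \<Longrightarrow> ht l k = ht l' k \<and> ht u k = ht u' k" for k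
  proof -
    assume k: "a \<le> k" "k < b"
    have "sg (bx k) = bx' k" "ht l' k < ht u' k" using sgx[OF k] by auto
    then have e: "ht u k - 1 = ht u' k - 1" using d0 by (simp add: sg_def bx_def bx'_def)
    have "ht l k < ht u k" using inD[OF k] by simp
    then have "ht u k = ht u' k" using e \<open>ht l' k < ht u' k\<close> by linarith
    moreover have "ht u' k = Suc (ht l' k)" using le1[of k] \<open>ht l' k < ht u' k\<close> by simp
    ultimately show ?thesis using inD[OF k] by simp
  qed
  show ?thesis
  proof
    fix k
    show "ht l k = ht l' k \<and> ht u k = ht u' k"
    proof (cases "k < a")
      case True then show ?thesis using pre[of k] by simp
    next
      case False
      show ?thesis
      proof (cases "k < b")
        case True then show ?thesis using mid[of k] False by simp
      next
        case F2: False
        show ?thesis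
        proof (cases "k \<le> m + r")
          case True then show ?thesis using suf[of k] F2 by simp
        next
          case False
          then show ?thesis using ht_eq_out[OF l l', of k] ht_eq_out[OF u u', of k] by simp
        qed
      qed
    qed
  qed
qed



lemma fun_sum_apply: "(sum g A) (i::'b) = sum (\<lambda>x. g x i) A" for g :: "'a \<Rightarrow> 'b \<Rightarrow> real"
  by (induction A rule: infinite_finite_induct) (auto simp: plus_fun_def zero_fun_def)

lemma fun_scaleR_apply: "(c *\<^sub>R f) i = c * f i" for f :: "'b \<Rightarrow> real"
  by (simp add: scaleR_fun_def)

lemma fun_add_apply: "(f + g) i = f i + g i" for f g :: "'b \<Rightarrow> real"
  by (simp add: plus_fun_def)

lemma seg_apply: "((1 - u) *\<^sub>R a + u *\<^sub>R b) i = (1 - u) * a i + u * b i" for a b :: "'b \<Rightarrow> real"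
  by (simp add: fun_scaleR_apply fun_add_apply)

lemma ind_vec_inj: "ind_vec A = ind_vec B \<Longrightarrow> A = B"
  unfolding ind_vec_def by (metis one_neq_zero set_eqI)

lemma extreme_seg:
  fixes a b :: "'b \<Rightarrow> real"
  assumes "a \<noteq> b"
  shows "a extreme_point_of closed_segment a b"
proof -
  obtain i where i: "a i \<noteq> b i" using assms by (meson ext)
  show ?thesis unfolding extreme_point_of_def
  proof (intro conjI ballI)
    show "a \<in> closed_segment a b" by simp
    fix x y assume x: "x \<in> closed_segment a b" and y: "y \<in> closed_segment a b"
    show "a \<notin> open_segment x y"
    proof
      assume "a \<in> open_segment x y"
      then obtain u where u: "0 < u" "u < 1" "a = (1 - u) *\<^sub>R x + u *\<^sub>R y" and xy: "x \<noteq> y"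
        unfolding in_segment by blast
      obtain s where s: "0 \<le> s" "s \<le> 1" "x = (1 - s) *\<^sub>R a + s *\<^sub>R b" using x unfolding in_segment by blast
      obtain t where t: "0 \<le> t" "t \<le> 1" "y = (1 - t) *\<^sub>R a + t *\<^sub>R b" using y unfolding in_segment by blast
      have "a i = (1 - u) * x i + u * y i" using u(3) seg_apply by metis
      moreover have "x i = (1 - s) * a i + s * b i" "y i = (1 - t) * a i + t * b i"
        using s(3) t(3) seg_apply by metis+
      ultimately have "((1 - u) * s + u * t) * (b i - a i) = 0" by algebra
      then have "(1 - u) * s + u * t = 0" using i by simp
      moreover have "0 \<le> (1 - u) * s" "0 \<le> u * t" using u s t by auto
      ultimately have "(1 - u) * s = 0" "u * t = 0" by linarith+
      then have "s = 0" "t = 0" using u by auto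
      then show False using s t xy by simp
    qed
  qed
qed

lemma ind_in_seg:
  assumes "z \<in> B" "z \<notin> B'" "ind_vec C \<in> closed_segment (ind_vec B) (ind_vec B')"
  shows "C = B \<or> C = B'"
proof -
  obtain u where u: "0 \<le> u" "u \<le> 1" "ind_vec C = (1 - u) *\<^sub>R ind_vec B + u *\<^sub>R ind_vec B'"
    using assms(3) unfolding in_segment by blast
  have "ind_vec C z = 1 - u" using seg_apply[of u "ind_vec B" "ind_vec B'" z] u(3) assms(1,2)
    by (simp add: ind_vec_def)
  then have "u = 0 \<or> u = 1" by (auto simp: ind_vec_def split: if_splits)
  moreover have "u = 0 \<Longrightarrow> ind_vec C = ind_vec B" using u(3) by simp
  moreover have "u = 1 \<Longrightarrow> ind_vec C = ind_vec B'" using u(3) by simp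
  ultimately show ?thesis using ind_vec_inj by blast
qed

definition gs :: "nat set \<Rightarrow> (nat \<Rightarrow> real) \<Rightarrow> real" where
  "gs S z = (\<Sum>i\<in>S. z i)"

lemma gs_lin: "gs S (u *\<^sub>R a + v *\<^sub>R b) = u * gs S a + v * gs S b"
  by (simp add: gs_def fun_scaleR_apply fun_add_apply sum.distrib sum_distrib_left)

lemma gs_sum: "gs S (\<Sum>w\<in>V. c w *\<^sub>R w) = (\<Sum>w\<in>V. c w * gs S w)"
  unfolding gs_def fun_sum_apply fun_scaleR_apply
  by (simp add: sum_distrib_left) (rule sum.swap)

lemma gs_ind: "finite S \<Longrightarrow> gs S (ind_vec C) = real (card (S \<inter> C))"
proof -
  assume fS: "finite S"
  have "gs S (ind_vec C) = (\<Sum>i\<in>S. if i \<in> C then 1 else 0)" by (simp add: gs_def ind_vec_def)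
  also have "\<dots> = (\<Sum>i\<in>{i\<in>S. i \<in> C}. 1)" using sum.inter_filter[OF fS, of "\<lambda>_. 1::real" "\<lambda>i. i \<in> C"] by simp
  also have "{i\<in>S. i \<in> C} = S \<inter> C" by auto
  finally show ?thesis by simp
qed

lemma card_inter_lt:
  assumes "finite C" "finite B" "card C = r" "card B = r" "C \<noteq> B"
  shows "card (B \<inter> C) < r"
proof -
  have "card (B \<inter> C) \<le> card C" by (rule card_mono) (use assms in auto)
  moreover have "card (B \<inter> C) \<noteq> r"
  proof
    assume e: "card (B \<inter> C) = r"
    have "B \<inter> C = C" using card_subset_eq[of C "B \<inter> C"] assms e by auto
    moreover have "B \<inter> C = B" using card_subset_eq[of B "B \<inter> C"] assms e by auto
    ultimately show False using assms by simp
  qed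
  ultimately show ?thesis using assms by simp
qed

lemma edge_of_pair:
  assumes finBs: "finite Bs" and Bs: "\<And>C. C \<in> Bs \<Longrightarrow> finite C \<and> card C = r"
    and B: "B \<in> Bs" and B': "B' \<in> Bs" and x: "B - B' = {x}" and y: "B' - B = {y}"
  shows "closed_segment (ind_vec B) (ind_vec B') \<in> edges_of (convex hull (ind_vec ` Bs))"
proof -
  define V where "V = ind_vec ` Bs"
  define K where "K = convex hull V"
  define f where "f z = gs B z + gs B' z" for z
  define M where "M = 2 * real r - 1"
  have fB: "finite B" "card B = r" using Bs B by auto
  have fB': "finite B'" "card B' = r" using Bs B' by auto
  have finV: "finite V" using finBs by (simp add: V_def)
  have flin: "f (u *\<^sub>R a + v *\<^sub>R b) = u * f a + v * f b" for u v a b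
    by (simp add: f_def gs_lin algebra_simps)
  have fsum: "f (\<Sum>w\<in>V. c w *\<^sub>R w) = (\<Sum>w\<in>V. c w * f w)" for c
    by (simp add: f_def gs_sum distrib_left sum.distrib)
  have BB: "B \<noteq> B'" using x by auto
  have eBB: "ind_vec B \<noteq> ind_vec B'" using BB ind_vec_inj by blast
  have cBB: "card (B \<inter> B') = r - 1"
  proof -
    have "B = insert x (B \<inter> B')" "x \<notin> B \<inter> B'" using x by auto
    then have "card B = Suc (card (B \<inter> B'))" using fB by (metis card_insert_disjoint finite_Int)
    then show ?thesis using fB by simp
  qed
  have r1: "1 \<le> r"
  proof -
    have "x \<in> B" using x by auto
    then have "card B \<noteq> 0" using fB(1) by auto
    then show ?thesis using fB by simp
  qed
  have fC: "C \<in> Bs \<Longrightarrow> f (ind_vec C) = real (card (B \<inter> C)) + real (card (B' \<inter> C))" for C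
    using gs_ind fB fB' by (simp add: f_def)
  have rr: "real (r - 1) = real r - 1" using r1 by (simp add: of_nat_diff)
  have BB2: "B' \<inter> B = B \<inter> B'" by blast
  have fBv: "f (ind_vec B) = M" "f (ind_vec B') = M"
  proof -
    have "f (ind_vec B) = real (card B) + real (card (B' \<inter> B))" using fC[OF B] by simp
    then show "f (ind_vec B) = M" using fB cBB rr BB2 by (simp add: M_def)
    have "f (ind_vec B') = real (card (B \<inter> B')) + real (card B')" using fC[OF B'] by simp
    then show "f (ind_vec B') = M" using fB' cBB rr by (simp add: M_def)
  qed
  have fO: "C \<in> Bs \<Longrightarrow> C \<noteq> B \<Longrightarrow> C \<noteq> B' \<Longrightarrow> f (ind_vec C) \<le> M - 1" for C
  proof -
    assume C: "C \<in> Bs" "C \<noteq> B" "C \<noteq> B'"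
    have "card (B \<inter> C) < r" using card_inter_lt[of C B r] Bs[OF C(1)] fB C by blast
    moreover have "card (B' \<inter> C) < r" using card_inter_lt[of C B' r] Bs[OF C(1)] fB' C by blast
    ultimately have "card (B \<inter> C) \<le> r - 1" "card (B' \<inter> C) \<le> r - 1" by auto
    then have "real (card (B \<inter> C)) \<le> real r - 1" "real (card (B' \<inter> C)) \<le> real r - 1"
      using rr by (metis of_nat_le_iff)+
    then show ?thesis using fC[OF C(1)] by (simp add: M_def)
  qed
  have fV: "w \<in> V \<Longrightarrow> f w \<le> M" for w
  proof -
    assume "w \<in> V"
    then obtain C where C: "C \<in> Bs" "w = ind_vec C" by (auto simp: V_def)
    show ?thesis
    proof (cases "C = B \<or> C = B'")
      case True then show ?thesis using fBv C by auto
    next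
      case False then show ?thesis using fO[OF C(1)] C by fastforce
    qed
  qed
  have convH: "convex {z. f z \<le> M}"
    unfolding convex_def
  proof (intro ballI allI impI)
    fix a b :: "nat \<Rightarrow> real" and u v :: real
    assume "a \<in> {z. f z \<le> M}" "b \<in> {z. f z \<le> M}" "0 \<le> u" "0 \<le> v" "u + v = 1"
    then have "u * f a + v * f b \<le> u * M + v * M" by (simp add: add_mono mult_left_mono)
    then show "u *\<^sub>R a + v *\<^sub>R b \<in> {z. f z \<le> M}" using flin \<open>u + v = 1\<close> by (simp add: distrib_right[symmetric])
  qed
  have fK: "z \<in> K \<Longrightarrow> f z \<le> M" for z
  proof -
    have "K \<subseteq> {z. f z \<le> M}" unfolding K_def by (rule hull_minimal) (use fV convH in auto)
    then show "z \<in> K \<Longrightarrow> f z \<le> M" by auto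
  qed
  have convK: "convex K" by (simp add: K_def)
  define F where "F = {z \<in> K. f z = M}"
  have face: "F face_of K"
    unfolding face_of_def
  proof (intro conjI ballI impI)
    show "F \<subseteq> K" by (auto simp: F_def)
    have convE: "convex {z. f z = M}" unfolding convex_def
    proof (intro ballI allI impI)
      fix a b :: "nat \<Rightarrow> real" and u v :: real
      assume "a \<in> {z. f z = M}" "b \<in> {z. f z = M}" "0 \<le> u" "0 \<le> v" "u + v = 1"
      then show "u *\<^sub>R a + v *\<^sub>R b \<in> {z. f z = M}" using flin
        by (simp add: distrib_right[symmetric])
    qed
    have "F = K \<inter> {z. f z = M}" by (auto simp: F_def)
    then show "convex F" using convE convK by (simp add: convex_Int)
  next
    fix a b z assume a: "a \<in> K" and b: "b \<in> K" and z: "z \<in> F" and zs: "z \<in> open_segment a b"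
    obtain u where u: "0 < u" "u < 1" "z = (1 - u) *\<^sub>R a + u *\<^sub>R b" using zs unfolding in_segment by blast
    have "f z = (1 - u) * f a + u * f b" using u flin by simp
    then have e: "(1 - u) * (M - f a) + u * (M - f b) = 0" using z by (simp add: F_def algebra_simps)
    have n1: "0 \<le> (1 - u) * (M - f a)" "0 \<le> u * (M - f b)" using fK a b u by auto
    then have "(1 - u) * (M - f a) = 0" "u * (M - f b) = 0" using e by linarith+
    then have "f a = M" "f b = M" using u by auto
    then show "a \<in> F" "b \<in> F" using a b by (simp_all add: F_def)
  qed
  have Fseg: "F = closed_segment (ind_vec B) (ind_vec B')"
  proof
    show "closed_segment (ind_vec B) (ind_vec B') \<subseteq> F"
    proof
      fix z assume z: "z \<in> closed_segment (ind_vec B) (ind_vec B')"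
      have "ind_vec B \<in> V" "ind_vec B' \<in> V" using B B' by (auto simp: V_def)
      then have "ind_vec B \<in> K" "ind_vec B' \<in> K" unfolding K_def by (auto intro: hull_inc)
      then have "z \<in> K" using closed_segment_subset[OF _ _ convK] z by blast
      moreover obtain u where u: "z = (1 - u) *\<^sub>R ind_vec B + u *\<^sub>R ind_vec B'" using z unfolding in_segment by blast
      then have "f z = (1 - u) * M + u * M" using flin[of "1 - u" "ind_vec B" u "ind_vec B'"] fBv by simp
      then have "f z = M" by (simp add: algebra_simps)
      ultimately show "z \<in> F" by (simp add: F_def)
    qed
  next
    show "F \<subseteq> closed_segment (ind_vec B) (ind_vec B')"
    proof
      fix z assume z: "z \<in> F"
      then have zK: "z \<in> K" and fz: "f z = M" by (auto simp: F_def)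
      obtain c where c: "\<forall>w\<in>V. 0 \<le> c w" "sum c V = 1" "(\<Sum>w\<in>V. c w *\<^sub>R w) = z"
        using zK unfolding K_def convex_hull_finite[OF finV] by blast
      have "(\<Sum>w\<in>V. c w * f w) = M" using fsum[of c] c(3) fz by simp
      moreover have "(\<Sum>w\<in>V. c w * M) = M"
      proof -
        have "(\<Sum>w\<in>V. c w * M) = (\<Sum>w\<in>V. c w) * M" by (rule sum_distrib_right[symmetric])
        then show ?thesis using c(2) by simp
      qed
      moreover have "(\<Sum>w\<in>V. c w * (M - f w)) = (\<Sum>w\<in>V. c w * M) - (\<Sum>w\<in>V. c w * f w)"
        by (simp add: right_diff_distrib sum_subtractf)
      ultimately have "(\<Sum>w\<in>V. c w * (M - f w)) = 0" by simp
      moreover have "\<forall>w\<in>V. 0 \<le> c w * (M - f w)"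
      proof
        fix w assume "w \<in> V"
        then have "0 \<le> c w" "0 \<le> M - f w" using c(1) fV by auto
        then show "0 \<le> c w * (M - f w)" by (rule mult_nonneg_nonneg)
      qed
      ultimately have zero: "\<forall>w\<in>V. c w * (M - f w) = 0" using sum_nonneg_eq_0_iff[OF finV, of "\<lambda>w. c w * (M - f w)"] by simp
      define W where "W = {ind_vec B, ind_vec B'}"
      have WV: "W \<subseteq> V" using B B' by (auto simp: W_def V_def)
      have c0: "w \<in> V - W \<Longrightarrow> c w = 0" for w
      proof -
        assume w: "w \<in> V - W"
        then obtain C where C: "C \<in> Bs" "w = ind_vec C" by (auto simp: V_def)
        have "C \<noteq> B" "C \<noteq> B'" using w C by (auto simp: W_def)
        then have "f w \<le> M - 1" using fO C by simp
        moreover have "c w * (M - f w) = 0" using zero w by auto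
        ultimately show "c w = 0" by simp
      qed
      have "z = (\<Sum>w\<in>W. c w *\<^sub>R w)" using c(3) sum.mono_neutral_right[OF finV WV, of "\<lambda>w. c w *\<^sub>R w"] c0 by simp
      also have "\<dots> = c (ind_vec B) *\<^sub>R ind_vec B + c (ind_vec B') *\<^sub>R ind_vec B'" using eBB by (simp add: W_def)
      finally have zeq: "z = c (ind_vec B) *\<^sub>R ind_vec B + c (ind_vec B') *\<^sub>R ind_vec B'" .
      have "sum c V = sum c W" using sum.mono_neutral_right[OF finV WV, of c] c0 by simp
      then have cs: "c (ind_vec B) + c (ind_vec B') = 1" using c(2) eBB by (simp add: W_def)
      have "0 \<le> c (ind_vec B')" "c (ind_vec B') \<le> 1" using c(1) WV cs by (auto simp: W_def)
      moreover have "1 - c (ind_vec B') = c (ind_vec B)" using cs by simp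
      then have "z = (1 - c (ind_vec B')) *\<^sub>R ind_vec B + c (ind_vec B') *\<^sub>R ind_vec B'"
        using zeq by simp
      ultimately show "z \<in> closed_segment (ind_vec B) (ind_vec B')" unfolding in_segment by blast
    qed
  qed
  have "closed_segment (ind_vec B) (ind_vec B') face_of convex hull (ind_vec ` Bs)"
    using face Fseg by (simp add: K_def V_def)
  then show ?thesis unfolding edges_of_def using eBB by blast
qed

lemma edge_endpoints:
  assumes F: "F \<in> edges_of (convex hull (ind_vec ` Bs))"
  shows "\<exists>B B'. B \<in> Bs \<and> B' \<in> Bs \<and> B \<noteq> B' \<and> F = closed_segment (ind_vec B) (ind_vec B') \<and>
     (\<forall>C C'. C \<in> Bs \<longrightarrow> C' \<in> Bs \<longrightarrow> (\<forall>i. ind_vec C i + ind_vec C' i = ind_vec B i + ind_vec B' i)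
        \<longrightarrow> C = B \<or> C = B')"
proof -
  define K where "K = convex hull (ind_vec ` Bs)"
  obtain a b where ab: "a \<noteq> b" "F = closed_segment a b" and face: "F face_of K"
    using F unfolding edges_of_def K_def by blast
  have "a extreme_point_of F" using extreme_seg[OF ab(1)] ab(2) by simp
  then have "a extreme_point_of K" using extreme_point_of_face[OF face] by blast
  then have "a \<in> ind_vec ` Bs" unfolding K_def by (rule extreme_point_of_convex_hull)
  then obtain B where B: "B \<in> Bs" "a = ind_vec B" by blast
  have "b extreme_point_of F" using extreme_seg[of b a] ab closed_segment_commute by metis
  then have "b extreme_point_of K" using extreme_point_of_face[OF face] by blast
  then have "b \<in> ind_vec ` Bs" unfolding K_def by (rule extreme_point_of_convex_hull)
  then obtain B' where B': "B' \<in> Bs" "b = ind_vec B'" by blast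
  have BB: "B \<noteq> B'" using ab B B' by auto
  have key: "C = B \<or> C = B'" if C: "C \<in> Bs" "C' \<in> Bs" and sm: "\<forall>i. ind_vec C i + ind_vec C' i = ind_vec B i + ind_vec B' i" for C C'
  proof -
    define mp where "mp = (1 - 1/2) *\<^sub>R ind_vec B + (1/2::real) *\<^sub>R ind_vec B'"
    have mpF: "mp \<in> F" unfolding ab(2) B B' in_segment mp_def by (intro exI[of _ "1/2"]) simp
    have mp2: "mp = (1 - 1/2) *\<^sub>R ind_vec C + (1/2::real) *\<^sub>R ind_vec C'"
    proof
      fix i
      have "mp i = (1 - 1/2) * ind_vec B i + 1/2 * ind_vec B' i" unfolding mp_def by (rule seg_apply)
      also have "\<dots> = (1 - 1/2) * ind_vec C i + 1/2 * ind_vec C' i" using sm[rule_format, of i] by simp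
      also have "\<dots> = ((1 - 1/2) *\<^sub>R ind_vec C + (1/2::real) *\<^sub>R ind_vec C') i" by (rule seg_apply[symmetric])
      finally show "mp i = ((1 - 1/2) *\<^sub>R ind_vec C + (1/2::real) *\<^sub>R ind_vec C') i" .
    qed
    have inK: "ind_vec C \<in> K" "ind_vec C' \<in> K" using C unfolding K_def by (auto intro: hull_inc)
    have "ind_vec C \<in> F"
    proof (cases "ind_vec C = ind_vec C'")
      case True
      then have "mp = ind_vec C" using mp2 by (simp add: scaleR_left_distrib[symmetric])
      then show ?thesis using mpF by simp
    next
      case False
      then have "mp \<in> open_segment (ind_vec C) (ind_vec C')" unfolding in_segment mp2
        by (intro conjI exI[of _ "1/2"]) auto
      then show ?thesis using face_ofD[OF face _ inK] mpF by blast
    qed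
    then have inseg: "ind_vec C \<in> closed_segment (ind_vec B) (ind_vec B')" using ab(2) B B' by simp
    show ?thesis
    proof (cases "\<exists>z. z \<in> B \<and> z \<notin> B'")
      case True
      then obtain z where "z \<in> B" "z \<notin> B'" by blast
      then show ?thesis using ind_in_seg inseg by blast
    next
      case False
      then obtain z where "z \<in> B'" "z \<notin> B" using BB by blast
      moreover have "ind_vec C \<in> closed_segment (ind_vec B') (ind_vec B)" using inseg closed_segment_commute by metis
      ultimately show ?thesis using ind_in_seg by blast
    qed
  qed
  show ?thesis using B B' BB ab key by blast
qed



definition hc :: "nat set \<Rightarrow> nat \<Rightarrow> nat" where
  "hc S k = card {z\<in>S. z \<le> k}"

lemma hc_0: "0 \<notin> S \<Longrightarrow> hc S 0 = 0"
proof -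
  assume "0 \<notin> S"
  then have "{z\<in>S. z \<le> 0} = {}" by auto
  then show ?thesis by (simp add: hc_def)
qed

lemma hc_Suc: "hc S (Suc k) = hc S k + (if Suc k \<in> S then 1 else 0)"
proof -
  have fin: "finite {z\<in>S. z \<le> k}" by simp
  have "{z\<in>S. z \<le> Suc k} = (if Suc k \<in> S then insert (Suc k) {z\<in>S. z \<le> k} else {z\<in>S. z \<le> k})"
    by (auto simp: le_Suc_eq)
  then show ?thesis using fin by (simp add: hc_def)
qed

lemma hc_all: "S \<subseteq> {1..n} \<Longrightarrow> n \<le> k \<Longrightarrow> hc S k = card S"
proof -
  assume "S \<subseteq> {1..n}" "n \<le> k"
  then have "{z\<in>S. z \<le> k} = S" by auto
  then show ?thesis by (simp add: hc_def)
qed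

lemma hc_eq_below: "(\<And>z. z \<le> k \<Longrightarrow> z \<in> S \<longleftrightarrow> z \<in> T) \<Longrightarrow> hc S k = hc T k"
proof -
  assume "\<And>z. z \<le> k \<Longrightarrow> z \<in> S \<longleftrightarrow> z \<in> T"
  then have "{z\<in>S. z \<le> k} = {z\<in>T. z \<le> k}" by auto
  then show ?thesis by (simp add: hc_def)
qed

lemma base_iff:
  assumes P: "lattice_path m r P" and Q: "lattice_path m r Q"
  shows "B \<in> lpm_bases m r P Q \<longleftrightarrow> B \<subseteq> {1..m+r} \<and> card B = r \<and>
           (\<forall>k \<le> m + r. ht P k \<le> hc B k \<and> hc B k \<le> ht Q k)"
proof -
  have len: "length P = m + r" "length Q = m + r" using P Q by (auto simp: lattice_path_def)
  show ?thesis
  proof (cases "B \<subseteq> {1..m+r}")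
    case True
    have h: "k \<le> m + r \<Longrightarrow> ht (path_of m r B) k = hc B k" for k using ht_path_of[OF True] by (simp add: hc_def)
    show ?thesis unfolding lpm_bases_def in_region_def never_above_def using True len h by auto
  next
    case False then show ?thesis by (simp add: lpm_bases_def)
  qed
qed

lemma exch:
  assumes P: "lattice_path m r P" and Q: "lattice_path m r Q"
    and B: "B \<in> lpm_bases m r P Q" and B': "B' \<in> lpm_bases m r P Q"
    and a1: "a1 \<in> B" "a1 \<notin> B'" and amin: "\<And>z. z < a1 \<Longrightarrow> z \<in> B \<longleftrightarrow> z \<in> B'"
    and ns: "\<And>y. B' - B \<noteq> {y}"
  shows "\<exists>C C'. C \<in> lpm_bases m r P Q \<and> C' \<in> lpm_bases m r P Q \<and> C \<noteq> B \<and> C \<noteq> B' \<and>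
           (\<forall>i. ind_vec C i + ind_vec C' i = ind_vec B i + ind_vec B' i)"
proof -
  define n where "n = m + r"
  have Bp: "B \<subseteq> {1..n}" "card B = r" "\<And>k. k \<le> n \<Longrightarrow> ht P k \<le> hc B k \<and> hc B k \<le> ht Q k"
    using B base_iff[OF P Q] by (auto simp: n_def)
  have B'p: "B' \<subseteq> {1..n}" "card B' = r" "\<And>k. k \<le> n \<Longrightarrow> ht P k \<le> hc B' k \<and> hc B' k \<le> ht Q k"
    using B' base_iff[OF P Q] by (auto simp: n_def)
  have a1n: "1 \<le> a1" "a1 \<le> n" using a1 Bp by auto
  have e1: "k < a1 \<Longrightarrow> hc B k = hc B' k" for k by (rule hc_eq_below) (use amin in auto)
  have e2: "hc B a1 = Suc (hc B' a1)"
  proof -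
    have s: "Suc (a1 - 1) = a1" using a1n by simp
    have "hc B a1 = hc B (a1 - 1) + 1" using hc_Suc[of B "a1 - 1"] s a1 by simp
    moreover have "hc B' a1 = hc B' (a1 - 1)" using hc_Suc[of B' "a1 - 1"] s a1 by simp
    moreover have "hc B (a1 - 1) = hc B' (a1 - 1)" using e1 a1n by simp
    ultimately show ?thesis by simp
  qed
  have hn: "hc B n = r" "hc B' n = r" using hc_all[OF Bp(1)] hc_all[OF B'p(1)] Bp B'p by auto
  have a1lt: "a1 < n" using e2 hn a1n by (metis le_neq_implies_less n_not_Suc_n)
  define b where "b = (LEAST k. a1 < k \<and> hc B k \<le> hc B' k)"
  have ex: "a1 < n \<and> hc B n \<le> hc B' n" using a1lt hn by simp
  have bp: "a1 < b" "hc B b \<le> hc B' b" using LeastI[of "\<lambda>k. a1 < k \<and> hc B k \<le> hc B' k", OF ex] by (auto simp: b_def)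
  have bn: "b \<le> n" unfolding b_def using ex by (rule Least_le)
  have mid: "a1 \<le> k \<Longrightarrow> k < b \<Longrightarrow> hc B' k < hc B k" for k
  proof -
    assume k: "a1 \<le> k" "k < b"
    show ?thesis
    proof (cases "k = a1")
      case True then show ?thesis using e2 by simp
    next
      case False
      then have "a1 < k" using k by simp
      then have "\<not> hc B k \<le> hc B' k" using not_less_Least[of k "\<lambda>k. a1 < k \<and> hc B k \<le> hc B' k"] k
        by (auto simp: b_def)
      then show ?thesis by simp
    qed
  qed
  have bs: "Suc (b - 1) = b" using bp by simp
  have pb: "hc B' (b - 1) < hc B (b - 1)" using mid[of "b - 1"] bp by simp
  have sB: "hc B b = hc B (b - 1) + (if b \<in> B then 1 else 0)" using hc_Suc[of B "b - 1"] bs by simp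
  have sB': "hc B' b = hc B' (b - 1) + (if b \<in> B' then 1 else 0)" using hc_Suc[of B' "b - 1"] bs by simp
  have bB: "b \<notin> B" "b \<in> B'" using sB sB' pb bp(2) by (auto split: if_splits)
  have ab: "a1 \<noteq> b" using bp by simp
  define C where "C = insert b (B - {a1})"
  define C' where "C' = insert a1 (B' - {b})"
  have finB: "finite B" "finite B'" using Bp B'p by (auto intro: finite_subset)
  have Csub: "C \<subseteq> {1..n}" "C' \<subseteq> {1..n}" using Bp B'p bB a1 by (auto simp: C_def C'_def)
  have cC: "card C = r"
  proof -
    have "card (B - {a1}) = r - 1" using Bp a1 finB by simp
    moreover have "b \<notin> B - {a1}" using bB by simp
    moreover have "card B \<noteq> 0" using a1 finB by auto
    then have "r \<ge> 1" using Bp(2) by simp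
    ultimately show ?thesis using finB by (simp add: C_def)
  qed
  have cC': "card C' = r"
  proof -
    have "card (B' - {b}) = r - 1" using B'p bB finB by simp
    moreover have "a1 \<notin> B' - {b}" using a1 by simp
    moreover have "card B' \<noteq> 0" using bB finB by auto
    then have "r \<ge> 1" using B'p(2) by simp
    ultimately show ?thesis using finB by (simp add: C'_def)
  qed
  have hC: "hc C k + (if a1 \<le> k then 1 else 0) = hc B k + (if b \<le> k then 1 else 0)" for k
  proof (induction k)
    case 0
    have "0 \<notin> C" "0 \<notin> B" using Csub Bp by auto
    then show ?case using a1n bp by (simp add: hc_0)
  next
    case (Suc k)
    have "(if Suc k \<in> C then 1 else 0) + (if a1 = Suc k then 1 else 0)
          = (if Suc k \<in> B then 1 else (0::nat)) + (if b = Suc k then 1 else 0)"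
      using a1 bB ab by (auto simp: C_def)
    then show ?case using Suc hc_Suc[of C k] hc_Suc[of B k] by (auto simp: le_Suc_eq split: if_splits)
  qed
  have hC': "hc C' k + (if b \<le> k then 1 else 0) = hc B' k + (if a1 \<le> k then 1 else 0)" for k
  proof (induction k)
    case 0
    have "0 \<notin> C'" "0 \<notin> B'" using Csub B'p by auto
    then show ?case using a1n bp by (simp add: hc_0)
  next
    case (Suc k)
    have "(if Suc k \<in> C' then 1 else 0) + (if b = Suc k then 1 else 0)
          = (if Suc k \<in> B' then 1 else (0::nat)) + (if a1 = Suc k then 1 else 0)"
      using a1 bB ab by (auto simp: C'_def)
    then show ?case using Suc hc_Suc[of C' k] hc_Suc[of B' k] by (auto simp: le_Suc_eq split: if_splits)
  qed
  have regC: "ht P k \<le> hc C k \<and> hc C k \<le> ht Q k" if k: "k \<le> n" for k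
  proof (cases "a1 \<le> k \<and> k < b")
    case True
    then have "hc C k + 1 = hc B k" using hC[of k] by simp
    then show ?thesis using mid[of k] True Bp(3)[OF k] B'p(3)[OF k] by linarith
  next
    case False
    then have "hc C k = hc B k" using hC[of k] bp by (auto split: if_splits)
    then show ?thesis using Bp(3)[OF k] by simp
  qed
  have regC': "ht P k \<le> hc C' k \<and> hc C' k \<le> ht Q k" if k: "k \<le> n" for k
  proof (cases "a1 \<le> k \<and> k < b")
    case True
    then have "hc C' k = hc B' k + 1" using hC'[of k] by simp
    then show ?thesis using mid[of k] True Bp(3)[OF k] B'p(3)[OF k] by linarith
  next
    case False
    then have "hc C' k = hc B' k" using hC'[of k] bp by (auto split: if_splits)
    then show ?thesis using B'p(3)[OF k] by simp
  qed
  have CB: "C \<in> lpm_bases m r P Q" using base_iff[OF P Q] Csub cC regC by (simp add: n_def)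
  have CB': "C' \<in> lpm_bases m r P Q" using base_iff[OF P Q] Csub cC' regC' by (simp add: n_def)
  have "C \<noteq> B" using ab a1 by (auto simp: C_def)
  moreover have "C \<noteq> B'"
  proof -
    have "b \<in> B' - B" using bB by simp
    then obtain y where y: "y \<in> B' - B" "y \<noteq> b" using ns[of b] by blast
    then have "y \<notin> C" by (auto simp: C_def)
    then show ?thesis using y by auto
  qed
  moreover have "\<forall>i. ind_vec C i + ind_vec C' i = ind_vec B i + ind_vec B' i"
    using a1 bB ab by (auto simp: ind_vec_def C_def C'_def)
  ultimately show ?thesis using CB CB' by blast
qed

lemma exch2:
  assumes P: "lattice_path m r P" and Q: "lattice_path m r Q"
    and B: "B \<in> lpm_bases m r P Q" and B': "B' \<in> lpm_bases m r P Q" and BB: "B \<noteq> B'"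
    and nsw: "\<not> (\<exists>x y. B - B' = {x} \<and> B' - B = {y})"
  shows "\<exists>C C'. C \<in> lpm_bases m r P Q \<and> C' \<in> lpm_bases m r P Q \<and> C \<noteq> B \<and> C \<noteq> B' \<and>
           (\<forall>i. ind_vec C i + ind_vec C' i = ind_vec B i + ind_vec B' i)"
proof -
  have Bp: "B \<subseteq> {1..m+r}" "card B = r" using B base_iff[OF P Q] by auto
  have B'p: "B' \<subseteq> {1..m+r}" "card B' = r" using B' base_iff[OF P Q] by auto
  have finB: "finite B" "finite B'" using Bp B'p by (auto intro: finite_subset)
  have cd: "card (B - B') = card (B' - B)"
  proof -
    have "card (B - B') = card B - card (B \<inter> B')" using finB by (simp add: card_Diff_subset_Int)
    moreover have "card (B' - B) = card B' - card (B' \<inter> B)" using finB by (simp add: card_Diff_subset_Int)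
    moreover have "B' \<inter> B = B \<inter> B'" by blast
    ultimately show ?thesis using Bp B'p by simp
  qed
  have ns1: "B' - B \<noteq> {y}" for y
  proof
    assume h: "B' - B = {y}"
    then have "card (B - B') = 1" using cd by simp
    then obtain x where "B - B' = {x}" by (rule card_1_singletonE)
    then show False using h nsw by blast
  qed
  have ns2: "B - B' \<noteq> {y}" for y
  proof
    assume h: "B - B' = {y}"
    then have "card (B' - B) = 1" using cd by simp
    then obtain x where "B' - B = {x}" by (rule card_1_singletonE)
    then show False using h nsw by blast
  qed
  define D where "D z = (z \<in> B - B' \<or> z \<in> B' - B)" for z
  obtain z0 where "D z0" using BB unfolding D_def by blast
  define a1 where "a1 = (LEAST z. D z)"
  have aD: "D a1" unfolding a1_def using \<open>D z0\<close> by (rule LeastI)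
  have amin: "z < a1 \<Longrightarrow> z \<in> B \<longleftrightarrow> z \<in> B'" for z
    using not_less_Least[of z D] unfolding a1_def D_def by blast
  show ?thesis
  proof (cases "a1 \<in> B - B'")
    case True
    then show ?thesis using exch[OF P Q B B', of a1] amin ns1 by auto
  next
    case False
    then have "a1 \<in> B' - B" using aD by (auto simp: D_def)
    then obtain C C' where CC: "C \<in> lpm_bases m r P Q" "C' \<in> lpm_bases m r P Q" "C \<noteq> B'" "C \<noteq> B"
      "\<forall>i. ind_vec C i + ind_vec C' i = ind_vec B' i + ind_vec B i"
      using exch[OF P Q B' B, of a1] amin ns2 by auto
    then show ?thesis by (metis add.commute)
  qed
qed

lemma edge_pair:
  assumes P: "lattice_path m r P" and Q: "lattice_path m r Q"
    and F: "F \<in> edges_of (lpm_polytope m r P Q)"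
  shows "\<exists>B B' x y. B \<in> lpm_bases m r P Q \<and> B' \<in> lpm_bases m r P Q \<and> B - B' = {x} \<and> B' - B = {y}
           \<and> F = closed_segment (ind_vec B) (ind_vec B')"
proof -
  obtain B B' where BB: "B \<in> lpm_bases m r P Q" "B' \<in> lpm_bases m r P Q" "B \<noteq> B'"
      "F = closed_segment (ind_vec B) (ind_vec B')"
    and key: "\<And>C C'. C \<in> lpm_bases m r P Q \<Longrightarrow> C' \<in> lpm_bases m r P Q \<Longrightarrow>
        (\<forall>i. ind_vec C i + ind_vec C' i = ind_vec B i + ind_vec B' i) \<Longrightarrow> C = B \<or> C = B'"
    using edge_endpoints[OF F[unfolded lpm_polytope_def]] by blast
  have "\<exists>x y. B - B' = {x} \<and> B' - B = {y}"
  proof (rule ccontr)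
    assume "\<not> (\<exists>x y. B - B' = {x} \<and> B' - B = {y})"
    then obtain C C' where "C \<in> lpm_bases m r P Q" "C' \<in> lpm_bases m r P Q" "C \<noteq> B" "C \<noteq> B'"
        "\<forall>i. ind_vec C i + ind_vec C' i = ind_vec B i + ind_vec B' i"
      using exch2[OF P Q BB(1,2,3)] by blast
    then show False using key by blast
  qed
  then show ?thesis using BB by blast
qed



lemma dom_elim:
  assumes P: "lattice_path m r P" and Q: "lattice_path m r Q"
    and R: "block_tiled_bottom m r P Q R" "card (snd (snd R)) = 1"
  shows "\<exists>l u a b. R = (l, u, {boxes m l u}) \<and> lattice_path m r l \<and> lattice_path m r u \<and>
     in_region P Q l \<and> in_region P Q u \<and> swap_rel a b l u \<and> 1 \<le> a \<and> a < b \<and> b \<le> m + r"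
proof -
  obtain l u \<tau> where Rt: "R = (l, u, \<tau>)" by (cases R) auto
  have band: "block_tiled_band m r P Q (l, u, \<tau>)" using R Rt by (simp add: block_tiled_bottom_def)
  then have reg: "block_tiled_region m r P Q (l, u, \<tau>)" and n2: "\<not> has_2x2 (boxes m l u)"
    by (auto simp: block_tiled_band_def)
  have lu: "lattice_path m r l" "lattice_path m r u" "in_region P Q l" "in_region P Q u" "never_above l u"
    and blk: "\<forall>S\<in>\<tau>. block m P Q S" and un: "\<Union>\<tau> = boxes m l u"
    using reg unfolding block_tiled_region_def by auto
  have "card \<tau> = 1" using R Rt by simp
  then obtain S where tS: "\<tau> = {S}" by (rule card_1_singletonE)
  have S: "S = boxes m l u" using un tS by simp
  have bs: "border_strip S" using blk tS by (simp add: block_def)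
  then have "S \<noteq> {}" "box_connected S" by (auto simp: border_strip_def)
  then obtain a b where ab: "1 \<le> a \<and> a < b \<and> b \<le> m + r \<and> swap_rel a b l u"
    using dom_swap[OF lu(1,2,5) _ n2] S by blast
  show ?thesis using Rt tS S lu ab by blast
qed

lemma dom_intro:
  assumes P: "lattice_path m r P" and Q: "lattice_path m r Q"
    and l: "lattice_path m r l" and u: "lattice_path m r u"
    and il: "in_region P Q l" and iu: "in_region P Q u"
    and s: "swap_rel a b l u" and ab: "1 \<le> a" "a < b" "b \<le> m + r"
  shows "block_tiled_bottom m r P Q (l, u, {boxes m l u}) \<and> card (snd (snd (l, u, {boxes m l u}))) = 1"
proof -
  define S where "S = boxes m l u"
  have hP: "ht P k \<le> ht l k" for k using never_above_all[OF P l] il by (simp add: in_region_def)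
  have hQ: "ht u k \<le> ht Q k" for k using never_above_all[OF u Q] iu by (simp add: in_region_def)
  have blk: "block m P Q S"
    unfolding block_def border_strip_def S_def
    using swap_ne[OF l u s ab(2)] skew_boxes swap_connected[OF l u s ab] swap_no2x2[OF l u s]
      boxes_sub[OF P Q l u hP hQ] by blast
  have cl: "clones S S"
  proof -
    have "(\<lambda>(i, j). (nat (int i + 0), nat (int j - 0))) ` S = S" by (auto simp: image_iff)
    then show ?thesis unfolding clones_def by (intro exI[of _ 0]) auto
  qed
  have reg: "block_tiled_region m r P Q (l, u, {S})"
    unfolding block_tiled_region_def
    using l u il iu swap_never_above[OF s] swap_cond1[OF l u s ab] blk cl by (simp add: S_def)
  have n2: "\<not> has_2x2 (boxes m l u)" by (rule swap_no2x2[OF l u s])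
  have band: "block_tiled_band m r P Q (l, u, {S})" using reg n2 by (simp add: block_tiled_band_def S_def)
  have bot: "never_above l (fst R') \<and> never_above u (fst (snd R'))"
    if R': "block_tiled_band m r P Q R'" "same_family (l, u, {S}) R'" for R'
  proof -
    obtain l' u' \<tau>' where Rt: "R' = (l', u', \<tau>')" by (cases R') auto
    have reg': "block_tiled_region m r P Q (l', u', \<tau>')" and n2': "\<not> has_2x2 (boxes m l' u')"
      using R' Rt by (auto simp: block_tiled_band_def)
    have lu': "lattice_path m r l'" "lattice_path m r u'" and un': "\<Union>\<tau>' = boxes m l' u'"
      using reg' unfolding block_tiled_region_def by auto
    have mi: "max_intersections l u = max_intersections l' u'"
      and "\<exists>g. bij_betw g {S} \<tau>' \<and> (\<forall>T\<in>{S}. clones T (g T))"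
      using R' Rt unfolding same_family_def by auto
    then obtain g where g: "bij_betw g {S} \<tau>'" "clones S (g S)" by auto
    have "\<tau>' = {g S}" using bij_betw_imp_surj_on[OF g(1)] by simp
    then have "boxes m l' u' = g S" using un' by simp
    then have "clones (boxes m l u) (boxes m l' u')" using g(2) by (simp add: S_def)
    then have eq: "\<forall>k. ht l k = ht l' k \<and> ht u k = ht u' k"
      using swap_bottom[OF l u s ab lu' n2' mi] by blast
    then show ?thesis using Rt by (simp add: never_above_def)
  qed
  have "block_tiled_bottom m r P Q (l, u, {S})"
    unfolding block_tiled_bottom_def using band bot by auto
  then show ?thesis by (simp add: S_def)
qed

lemma Npos_inj_lp:
  assumes "lattice_path m r p" "lattice_path m r q" "Npos p = Npos q"
  shows "p = q"
proof -
  have lp: "length p = m + r" "length q = m + r" using assms by (auto simp: lattice_path_def)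
  have "p = path_of m r (Npos p)" using path_of_Npos[OF lp(1)] by simp
  also have "\<dots> = path_of m r (Npos q)" using assms(3) by simp
  also have "\<dots> = q" using path_of_Npos[OF lp(2)] by simp
  finally show ?thesis .
qed

lemma seg_ext_iff:
  fixes a b :: "'b \<Rightarrow> real"
  assumes "a \<noteq> b"
  shows "x extreme_point_of closed_segment a b \<longleftrightarrow> x = a \<or> x = b"
proof
  assume x: "x extreme_point_of closed_segment a b"
  then have "x \<in> closed_segment a b" by (simp add: extreme_point_of_def)
  then obtain u where u: "0 \<le> u" "u \<le> 1" "x = (1 - u) *\<^sub>R a + u *\<^sub>R b" unfolding in_segment by blast
  show "x = a \<or> x = b"
  proof (rule ccontr)
    assume "\<not> (x = a \<or> x = b)"
    then have "u \<noteq> 0" "u \<noteq> 1" using u by auto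
    then have "x \<in> open_segment a b" unfolding in_segment using u assms by (auto intro!: exI[of _ u])
    then show False using x unfolding extreme_point_of_def by auto
  qed
next
  assume "x = a \<or> x = b"
  then show "x extreme_point_of closed_segment a b"
    using extreme_seg[OF assms] extreme_seg[of b a] assms closed_segment_commute by metis
qed

lemma seg_eq_ends:
  fixes a b c d :: "'b \<Rightarrow> real"
  assumes ab: "a \<noteq> b" and cd: "c \<noteq> d" and e: "closed_segment a b = closed_segment c d"
  shows "(a = c \<and> b = d) \<or> (a = d \<and> b = c)"
proof -
  have "{x. x = a \<or> x = b} = {x. x = c \<or> x = d}"
    using seg_ext_iff[OF ab] seg_ext_iff[OF cd] e by auto
  moreover have "{x. x = a \<or> x = b} = {a, b}" "{x. x = c \<or> x = d} = {c, d}" by auto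
  ultimately have "{a, b} = {c, d}" by simp
  then show ?thesis by (simp add: doubleton_eq_iff)
qed

theorem proposition5p8:
  fixes m r :: nat and P Q :: "bool list"
  assumes "lattice_path m r P" and "lattice_path m r Q"
    and "never_above P Q"
    and "connected_region m r P Q"
  shows "bij_betw
           (\<lambda>(l, u, \<tau>). closed_segment (ind_vec (Npos l)) (ind_vec (Npos u)))
           {R. block_tiled_bottom m r P Q R \<and> card (snd (snd R)) = 1}
           (edges_of (lpm_polytope m r P Q))"
proof -
  note P = assms(1) and Q = assms(2)
  define f where "f = (\<lambda>(l::bool list, u::bool list, \<tau>::(nat\<times>nat) set set). closed_segment (ind_vec (Npos l)) (ind_vec (Npos u)))"
  define Dom where "Dom = {R. block_tiled_bottom m r P Q R \<and> card (snd (snd R)) = 1}"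
  have fin: "finite (lpm_bases m r P Q)"
    by (rule finite_subset[of _ "Pow {1..m+r}"]) (auto simp: lpm_bases_def)
  have Bsp: "\<And>C. C \<in> lpm_bases m r P Q \<Longrightarrow> finite C \<and> card C = r"
    by (auto simp: lpm_bases_def intro: finite_subset)
  have Npos_base: "Npos p \<in> lpm_bases m r P Q" if p: "lattice_path m r p" "in_region P Q p" for p
  proof -
    have len: "length p = m + r" using p by (simp add: lattice_path_def)
    show ?thesis unfolding lpm_bases_def using Npos_sub[of p] len card_Npos[of p] p path_of_Npos[OF len]
      by (simp add: lattice_path_def)
  qed
  have ne: "Npos l \<noteq> Npos u" if "swap_rel a b l u" "lattice_path m r l" "lattice_path m r u"
    "1 \<le> a" "a < b" "b \<le> m + r" for l u a b
    using swap_Npos[OF that(2,3,1,4,5,6)] by auto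
  have inj: "inj_on f Dom"
  proof (rule inj_onI)
    fix R1 R2 assume R1: "R1 \<in> Dom" and R2: "R2 \<in> Dom" and fe: "f R1 = f R2"
    obtain l1 u1 a1 b1 where D1: "R1 = (l1, u1, {boxes m l1 u1})" "lattice_path m r l1" "lattice_path m r u1"
      "swap_rel a1 b1 l1 u1" "1 \<le> a1" "a1 < b1" "b1 \<le> m + r"
      using dom_elim[OF P Q] R1 unfolding Dom_def by blast
    obtain l2 u2 a2 b2 where D2: "R2 = (l2, u2, {boxes m l2 u2})" "lattice_path m r l2" "lattice_path m r u2"
      "swap_rel a2 b2 l2 u2" "1 \<le> a2" "a2 < b2" "b2 \<le> m + r"
      using dom_elim[OF P Q] R2 unfolding Dom_def by blast
    have n1: "ind_vec (Npos l1) \<noteq> ind_vec (Npos u1)" using ne[OF D1(4,2,3,5,6,7)] ind_vec_inj by blast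
    have n2: "ind_vec (Npos l2) \<noteq> ind_vec (Npos u2)" using ne[OF D2(4,2,3,5,6,7)] ind_vec_inj by blast
    have se: "closed_segment (ind_vec (Npos l1)) (ind_vec (Npos u1)) = closed_segment (ind_vec (Npos l2)) (ind_vec (Npos u2))"
      using fe D1(1) D2(1) by (simp add: f_def)
    have len: "length l1 = m + r" "length u1 = m + r" "length l2 = m + r" "length u2 = m + r"
      using D1 D2 by (auto simp: lattice_path_def)
    from seg_eq_ends[OF n1 n2 se] show "R1 = R2"
    proof
      assume "ind_vec (Npos l1) = ind_vec (Npos l2) \<and> ind_vec (Npos u1) = ind_vec (Npos u2)"
      then have "Npos l1 = Npos l2" "Npos u1 = Npos u2" using ind_vec_inj by auto
      then have "l1 = l2" "u1 = u2" using Npos_inj_lp D1(2,3) D2(2,3) by blast+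
      then show "R1 = R2" using D1(1) D2(1) by simp
    next
      assume "ind_vec (Npos l1) = ind_vec (Npos u2) \<and> ind_vec (Npos u1) = ind_vec (Npos l2)"
      then have "Npos l1 = Npos u2" "Npos u1 = Npos l2" using ind_vec_inj by auto
      then have "l1 = u2" "u1 = l2" using Npos_inj_lp D1(2,3) D2(2,3) by blast+
      moreover have "ht u1 a1 = Suc (ht l1 a1)" using swap_D[OF D1(4), of a1] D1 by simp
      moreover have "ht l2 a1 \<le> ht u2 a1" using swap_D[OF D2(4), of a1] by simp
      ultimately show "R1 = R2" by simp
    qed
  qed
  have sub: "f ` Dom \<subseteq> edges_of (lpm_polytope m r P Q)"
  proof
    fix F assume "F \<in> f ` Dom"
    then obtain R where R: "R \<in> Dom" "F = f R" by blast
    obtain l u a b where D: "R = (l, u, {boxes m l u})" "lattice_path m r l" "lattice_path m r u"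
      "in_region P Q l" "in_region P Q u" "swap_rel a b l u" "1 \<le> a" "a < b" "b \<le> m + r"
      using dom_elim[OF P Q] R(1) unfolding Dom_def by blast
    have d: "Npos u - Npos l = {a}" "Npos l - Npos u = {b}" using swap_Npos[OF D(2,3,6,7,8,9)] by auto
    have "closed_segment (ind_vec (Npos u)) (ind_vec (Npos l)) \<in> edges_of (convex hull (ind_vec ` lpm_bases m r P Q))"
      by (rule edge_of_pair[OF fin Bsp Npos_base[OF D(3,5)] Npos_base[OF D(2,4)] d])
    moreover have "F = closed_segment (ind_vec (Npos l)) (ind_vec (Npos u))" using R(2) D(1) by (simp add: f_def)
    ultimately show "F \<in> edges_of (lpm_polytope m r P Q)"
      unfolding lpm_polytope_def by (simp add: closed_segment_commute)
  qed
  have sup: "edges_of (lpm_polytope m r P Q) \<subseteq> f ` Dom"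
  proof
    fix F assume F: "F \<in> edges_of (lpm_polytope m r P Q)"
    obtain B B' x y where BB: "B \<in> lpm_bases m r P Q" "B' \<in> lpm_bases m r P Q" "B - B' = {x}" "B' - B = {y}"
      and Fe: "F = closed_segment (ind_vec B) (ind_vec B')"
      using edge_pair[OF P Q F] by blast
    have mk: "F \<in> f ` Dom" if U: "U \<in> lpm_bases m r P Q" and L: "L \<in> lpm_bases m r P Q"
      and d1: "U - L = {xa}" and d2: "L - U = {ya}" and xy: "xa < ya"
      and Fe2: "F = closed_segment (ind_vec L) (ind_vec U)" for U L xa ya
    proof -
      have Up: "U \<subseteq> {1..m+r}" "card U = r" "in_region P Q (path_of m r U)" using U by (auto simp: lpm_bases_def)
      have Lp: "L \<subseteq> {1..m+r}" "card L = r" "in_region P Q (path_of m r L)" using L by (auto simp: lpm_bases_def)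
      define u where "u = path_of m r U"
      define l where "l = path_of m r L"
      have lu: "lattice_path m r u" "lattice_path m r l"
        using lattice_path_path_of Up Lp by (auto simp: u_def l_def)
      have NN: "Npos u = U" "Npos l = L" using Npos_path_of Up Lp by (auto simp: u_def l_def)
      have sw: "swap_rel xa ya l u \<and> 1 \<le> xa \<and> ya \<le> m + r"
        using Npos_swap[OF lu(2) lu(1)] NN d1 d2 xy by simp
      have sw': "swap_rel xa ya l u" "1 \<le> xa" "ya \<le> m + r" using sw by auto
      have il: "in_region P Q l" "in_region P Q u" using Lp Up by (simp_all add: u_def l_def)
      have "block_tiled_bottom m r P Q (l, u, {boxes m l u}) \<and> card (snd (snd (l, u, {boxes m l u}))) = 1"
        by (rule dom_intro[OF P Q lu(2) lu(1) il sw'(1) sw'(2) xy sw'(3)])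
      then have "(l, u, {boxes m l u}) \<in> Dom" by (simp add: Dom_def)
      moreover have "F = f (l, u, {boxes m l u})" using Fe2 NN by (simp add: f_def)
      ultimately show ?thesis by (intro image_eqI)
    qed
    have "x \<noteq> y" using BB by auto
    then show "F \<in> f ` Dom"
    proof (cases "x < y")
      case True
      show ?thesis by (rule mk[OF BB(1) BB(2) BB(3) BB(4) True]) (simp add: Fe closed_segment_commute)
    next
      case False
      then have "y < x" using \<open>x \<noteq> y\<close> by simp
      show ?thesis by (rule mk[OF BB(2) BB(1) BB(4) BB(3) \<open>y < x\<close>]) (simp add: Fe)
    qed
  qed
  have "bij_betw f Dom (edges_of (lpm_polytope m r P Q))"
    unfolding bij_betw_def using inj sub sup by blast
  then show ?thesis by (simp add: f_def Dom_def)
qed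

end
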